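(* Let $\varphi\in C^2(\partial B^2)$ and let $u=\Psi_{B^2,\varphi}$ on $B^2$, extended by $u=\varphi$ on $\partial B^2$. Then $u\in Lip(\overline{B^2})$, i.e. $u$ is Lipschitz on $\overline{B^2}$.
   Context: $B^2$ is the unit ball of $\mathbb{O}^2\cong\mathbb{R}^{16}$, $\mathbb{O}$ the octonions (basis $e_0=1,\dots,e_7$, $e_p^2=-1$, $e_pe_q=-e_qe_p$ for $p\ne q\ge1$). $OPSH(\Omega)$: upper semicontinuous $[-\infty,\infty)$-valued functions subharmonic on every affine octonionic line (translate of $\{(\mathbf{x},\mathbf{b}\mathbf{x}):\mathbf{x}\in\mathbb{O}\}$, $\mathbf{b}\in\mathbb{O}$, or of $\{(0,\mathbf{x})\}$). Perron–Bremermann function: $\Psi_{B^2,\varphi}(\mathbf{x})=\sup\{w(\mathbf{x}):w\in OPSH(B^2),\ \limsup_{B^2\ni\mathbf{y}\to\mathbf{z}}w(\mathbf{y})\le\varphi(\mathbf{z})\ \forall\mathbf{z}\in\partial B^2\}$. *)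

theory Defs
  imports "HOL-Analysis.Analysis" "HOL-Library.Liminf_Limsup"
begin

section \<open>Octonions via the Cayley--Dickson construction\<close>

type_synonym quat = "complex \<times> complex"
type_synonym oct = "quat \<times> quat"

definition qmult :: "quat \<Rightarrow> quat \<Rightarrow> quat" where
  "qmult p q = (case p of (a, b) \<Rightarrow> case q of (c, d) \<Rightarrow>
      (a * c - cnj d * b, d * a + b * cnj c))"

definition qcnj :: "quat \<Rightarrow> quat" where
  "qcnj p = (case p of (a, b) \<Rightarrow> (cnj a, - b))"

definition omult :: "oct \<Rightarrow> oct \<Rightarrow> oct" where
  "omult p q = (case p of (a, b) \<Rightarrow> case q of (c, d) \<Rightarrow>
      (qmult a c - qmult (qcnj d) b, qmult d a + qmult b (qcnj c)))"

definition C2_on :: "'a::euclidean_space set \<Rightarrow> ('a \<Rightarrow> real) \<Rightarrow> bool" where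
  "C2_on U f \<longleftrightarrow> (\<exists>(D :: 'a \<Rightarrow> ('a \<Rightarrow>\<^sub>L real)) (D2 :: 'a \<Rightarrow> ('a \<Rightarrow>\<^sub>L ('a \<Rightarrow>\<^sub>L real))).
      (\<forall>x\<in>U. (f has_derivative blinfun_apply (D x)) (at x)) \<and>
      (\<forall>x\<in>U. (D has_derivative blinfun_apply (D2 x)) (at x)) \<and>
      continuous_on U D2)"

definition harmonic_on :: "'a::euclidean_space set \<Rightarrow> ('a \<Rightarrow> real) \<Rightarrow> bool" where
  "harmonic_on U f \<longleftrightarrow> (\<exists>(D :: 'a \<Rightarrow> ('a \<Rightarrow>\<^sub>L real)) (D2 :: 'a \<Rightarrow> ('a \<Rightarrow>\<^sub>L ('a \<Rightarrow>\<^sub>L real))).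
      (\<forall>x\<in>U. (f has_derivative blinfun_apply (D x)) (at x)) \<and>
      (\<forall>x\<in>U. (D has_derivative blinfun_apply (D2 x)) (at x)) \<and>
      continuous_on U D2 \<and>
      (\<forall>x\<in>U. (\<Sum>i\<in>Basis. blinfun_apply (blinfun_apply (D2 x) i) i) = 0))"

definition usc_on :: "'a::topological_space set \<Rightarrow> ('a \<Rightarrow> ereal) \<Rightarrow> bool" where
  "usc_on U u \<longleftrightarrow> (\<forall>x\<in>U. \<forall>c. u x < c \<longrightarrow> eventually (\<lambda>y. u y < c) (at x within U))"

definition subharmonic_on :: "'a::euclidean_space set \<Rightarrow> ('a \<Rightarrow> ereal) \<Rightarrow> bool" where
  "subharmonic_on U u \<longleftrightarrow>
     (\<forall>x\<in>U. u x < \<infinity>) \<and> usc_on U u \<and>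
     (\<forall>x r h. 0 < r \<longrightarrow> cball x r \<subseteq> U \<longrightarrow> continuous_on (cball x r) h \<longrightarrow>
        harmonic_on (ball x r) h \<longrightarrow> (\<forall>y\<in>sphere x r. u y \<le> ereal (h y)) \<longrightarrow>
        (\<forall>y\<in>cball x r. u y \<le> ereal (h y)))"

definition oline :: "oct \<times> oct \<Rightarrow> oct \<Rightarrow> oct \<Rightarrow> oct \<times> oct" where
  "oline p b x = p + (x, omult b x)"

definition vline :: "oct \<times> oct \<Rightarrow> oct \<Rightarrow> oct \<times> oct" where
  "vline p x = p + (0, x)"

definition OPSH :: "(oct \<times> oct) set \<Rightarrow> (oct \<times> oct \<Rightarrow> ereal) \<Rightarrow> bool" where
  "OPSH \<Omega> w \<longleftrightarrow> (\<forall>x\<in>\<Omega>. w x < \<infinity>) \<and> usc_on \<Omega> w \<and>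
     (\<forall>p b. subharmonic_on (oline p b -` \<Omega>) (w \<circ> oline p b)) \<and>
     (\<forall>p. subharmonic_on (vline p -` \<Omega>) (w \<circ> vline p))"

definition perron_bremermann :: "(oct \<times> oct) set \<Rightarrow> (oct \<times> oct \<Rightarrow> real) \<Rightarrow> oct \<times> oct \<Rightarrow> ereal" where
  "perron_bremermann \<Omega> \<phi> x = Sup {w x | w. OPSH \<Omega> w \<and>
      (\<forall>z\<in>frontier \<Omega>. Limsup (at z within \<Omega>) w \<le> ereal (\<phi> z))}"

definition C2_on_sphere :: "((oct \<times> oct) \<Rightarrow> real) \<Rightarrow> bool" where
  "C2_on_sphere \<phi> \<longleftrightarrow> (\<exists>U \<Phi>. open U \<and> sphere 0 1 \<subseteq> U \<and> C2_on U \<Phi> \<and>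
      (\<forall>z\<in>sphere 0 1. \<Phi> z = \<phi> z))"

end

theory Submission
  imports Defs
begin

lemma qmult_linear: "linear (qmult a)"
  apply (rule linearI)
  apply (auto simp: qmult_def split: prod.splits simp: algebra_simps scaleR_conv_of_real)
  done

lemma qmult_linear2: "linear (\<lambda>a. qmult a c)"
  apply (rule linearI)
  apply (auto simp: qmult_def split: prod.splits simp: algebra_simps scaleR_conv_of_real)
  done

lemma qcnj_linear: "linear qcnj"
  apply (rule linearI)
  apply (auto simp: qcnj_def split: prod.splits simp: algebra_simps scaleR_conv_of_real)
  done

lemma omult_alt: "omult p q = (qmult (fst p) (fst q) - qmult (qcnj (snd q)) (snd p),
   qmult (snd q) (fst p) + qmult (snd p) (qcnj (fst q)))"
  by (cases p; cases q) (simp add: omult_def)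

lemma omult_linear: "linear (omult b)"
proof (rule linearI)
  fix x y show "omult b (x + y) = omult b x + omult b y"
    unfolding omult_alt
    using linear_add[OF qmult_linear] linear_add[OF qmult_linear2] linear_add[OF qcnj_linear]
    by (simp add: algebra_simps)
next
  fix r x show "omult b (r *\<^sub>R x) = r *\<^sub>R omult b x"
    unfolding omult_alt
    using linear_scale[OF qmult_linear] linear_scale[OF qmult_linear2] linear_scale[OF qcnj_linear]
    by (simp add: algebra_simps)
qed

lemma harmonic_onE:
  assumes "harmonic_on U f"
  obtains D D2 where "\<forall>x\<in>U. (f has_derivative blinfun_apply (D x)) (at x)"
      "\<forall>x\<in>U. (D has_derivative blinfun_apply (D2 x)) (at x)"
      "continuous_on U D2"
      "\<forall>x\<in>U. (\<Sum>i\<in>Basis. blinfun_apply (blinfun_apply (D2 x) i) i) = 0"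
  using assms unfolding harmonic_on_def by blast

lemma harmonic_on_subset: "harmonic_on U f \<Longrightarrow> V \<subseteq> U \<Longrightarrow> harmonic_on V f"
  unfolding harmonic_on_def by (meson continuous_on_subset subsetD)

lemma harmonic_on_add:
  assumes "harmonic_on U f" "harmonic_on U g"
  shows "harmonic_on U (\<lambda>x. f x + g x)"
proof -
  obtain D D2 where f: "\<forall>x\<in>U. (f has_derivative blinfun_apply (D x)) (at x)"
      "\<forall>x\<in>U. (D has_derivative blinfun_apply (D2 x)) (at x)"
      "continuous_on U D2"
      "\<forall>x\<in>U. (\<Sum>i\<in>Basis. blinfun_apply (blinfun_apply (D2 x) i) i) = 0"
    using assms(1) by (rule harmonic_onE)
  obtain E E2 where g: "\<forall>x\<in>U. (g has_derivative blinfun_apply (E x)) (at x)"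
      "\<forall>x\<in>U. (E has_derivative blinfun_apply (E2 x)) (at x)"
      "continuous_on U E2"
      "\<forall>x\<in>U. (\<Sum>i\<in>Basis. blinfun_apply (blinfun_apply (E2 x) i) i) = 0"
    using assms(2) by (rule harmonic_onE)
  show ?thesis unfolding harmonic_on_def
  proof (intro exI[of _ "\<lambda>x. D x + E x"] exI[of _ "\<lambda>x. D2 x + E2 x"] conjI ballI)
    fix x assume x: "x \<in> U"
    show "((\<lambda>x. f x + g x) has_derivative blinfun_apply (D x + E x)) (at x)"
      using has_derivative_add[OF f(1)[rule_format, OF x] g(1)[rule_format, OF x]]
      by (simp add: plus_blinfun.rep_eq)
    show "((\<lambda>x. D x + E x) has_derivative blinfun_apply (D2 x + E2 x)) (at x)"
      using has_derivative_add[OF f(2)[rule_format, OF x] g(2)[rule_format, OF x]]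
      by (simp add: plus_blinfun.rep_eq fun_eq_iff)
    show "(\<Sum>i\<in>Basis. blinfun_apply (blinfun_apply (D2 x + E2 x) i) i) = 0"
      using f(4) g(4) x by (simp add: plus_blinfun.rep_eq sum.distrib)
  next
    show "continuous_on U (\<lambda>x. D2 x + E2 x)"
      using f(3) g(3) by (intro continuous_intros)
  qed
qed

lemma harmonic_on_scale:
  assumes "harmonic_on U f"
  shows "harmonic_on U (\<lambda>x. c * f x)"
proof -
  obtain D D2 where f: "\<forall>x\<in>U. (f has_derivative blinfun_apply (D x)) (at x)"
      "\<forall>x\<in>U. (D has_derivative blinfun_apply (D2 x)) (at x)"
      "continuous_on U D2"
      "\<forall>x\<in>U. (\<Sum>i\<in>Basis. blinfun_apply (blinfun_apply (D2 x) i) i) = 0"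
    using assms(1) by (rule harmonic_onE)
  show ?thesis unfolding harmonic_on_def
  proof (intro exI[of _ "\<lambda>x. c *\<^sub>R D x"] exI[of _ "\<lambda>x. c *\<^sub>R D2 x"] conjI ballI)
    fix x assume x: "x \<in> U"
    show "((\<lambda>x. c * f x) has_derivative blinfun_apply (c *\<^sub>R D x)) (at x)"
      using has_derivative_scaleR_right[OF f(1)[rule_format, OF x], of c]
      by (simp add: scaleR_blinfun.rep_eq)
    show "((\<lambda>x. c *\<^sub>R D x) has_derivative blinfun_apply (c *\<^sub>R D2 x)) (at x)"
      using has_derivative_scaleR_right[OF f(2)[rule_format, OF x], of c]
      by (simp add: scaleR_blinfun.rep_eq fun_eq_iff)
    show "(\<Sum>i\<in>Basis. blinfun_apply (blinfun_apply (c *\<^sub>R D2 x) i) i) = 0"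
      using f(4) x by (simp add: scaleR_blinfun.rep_eq sum_distrib_left[symmetric])
  next
    show "continuous_on U (\<lambda>x. c *\<^sub>R D2 x)"
      using f(3) by (intro continuous_intros)
  qed
qed

lemma harmonic_on_affine:
  fixes l :: "'a::euclidean_space \<Rightarrow> real"
  assumes "linear l"
  shows "harmonic_on U (\<lambda>x. a + l x)"
proof -
  have bl: "bounded_linear l" using assms by (simp add: linear_conv_bounded_linear)
  show ?thesis unfolding harmonic_on_def
  proof (intro exI[of _ "\<lambda>x. Blinfun l"] exI[of _ "\<lambda>x. 0"] conjI ballI)
    fix x
    show "((\<lambda>x. a + l x) has_derivative blinfun_apply (Blinfun l)) (at x)"
      using bl by (auto simp: bounded_linear_Blinfun_apply intro!: derivative_eq_intros bounded_linear_imp_has_derivative)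
    show "((\<lambda>x. Blinfun l) has_derivative blinfun_apply 0) (at x)"
      by (auto simp: zero_blinfun.rep_eq intro!: derivative_eq_intros)
    show "(\<Sum>i\<in>Basis. blinfun_apply (blinfun_apply (0::'a \<Rightarrow>\<^sub>L 'a \<Rightarrow>\<^sub>L real) i) i) = 0"
      by simp
  qed simp
qed

lemma harmonic_min_principle:
  fixes H :: "'a::euclidean_space \<Rightarrow> real"
  assumes r: "0 < r" and harm: "harmonic_on (ball c r) H" and cont: "continuous_on (cball c r) H"
    and sph: "\<forall>y\<in>sphere c r. 0 \<le> H y"
  shows "\<forall>y\<in>cball c r. 0 \<le> H y"
proof (rule ccontr)
  assume "\<not> ?thesis"
  then obtain y0 where y0: "y0 \<in> cball c r" "H y0 < 0" by auto
  obtain D D2 where f: "\<forall>x\<in>ball c r. (H has_derivative blinfun_apply (D x)) (at x)"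
      "\<forall>x\<in>ball c r. (D has_derivative blinfun_apply (D2 x)) (at x)"
      "\<forall>x\<in>ball c r. (\<Sum>i\<in>Basis. blinfun_apply (blinfun_apply (D2 x) i) i) = 0"
    using harm by (rule harmonic_onE) blast
  define \<epsilon> where "\<epsilon> = - H y0 / (2 * r^2)"
  have \<epsilon>: "\<epsilon> > 0" using y0 r by (simp add: \<epsilon>_def divide_neg_pos)
  have Hy0: "H y0 = - 2 * \<epsilon> * r^2" using r by (simp add: \<epsilon>_def)
  define F where "F y = H y - \<epsilon> * (norm (y - c))^2" for y
  have "continuous_on (cball c r) F" unfolding F_def using cont by (intro continuous_intros)
  then obtain ys where ys: "ys \<in> cball c r" "\<forall>y\<in>cball c r. F ys \<le> F y"
    using continuous_attains_inf[of "cball c r" F] r by auto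
  have "F ys \<le> F y0" using ys y0 by auto
  also have "F y0 \<le> H y0" unfolding F_def using \<epsilon> by simp
  finally have "F ys \<le> - 2 * \<epsilon> * r^2" using Hy0 by simp
  moreover have "\<epsilon> * r^2 > 0" using \<epsilon> r by simp
  ultimately have Fys: "F ys < - \<epsilon> * r^2" by linarith
  have "ys \<notin> sphere c r"
  proof
    assume "ys \<in> sphere c r"
    then have "F ys = H ys - \<epsilon> * r^2" by (simp add: F_def dist_norm norm_minus_commute)
    moreover have "0 \<le> H ys" using sph \<open>ys \<in> sphere c r\<close> by blast
    ultimately show False using Fys by linarith
  qed
  then have ysb: "ys \<in> ball c r" using ys by auto
  have "\<exists>i\<in>Basis. blinfun_apply (blinfun_apply (D2 ys) i) i \<le> 0"
  proof (rule ccontr)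
    assume "\<not> ?thesis"
    then have "(\<Sum>i\<in>Basis. blinfun_apply (blinfun_apply (D2 ys) i) i) > 0"
      by (intro sum_pos) auto
    then show False using f(3) ysb by auto
  qed
  then obtain i where i: "i \<in> Basis" "blinfun_apply (blinfun_apply (D2 ys) i) i \<le> 0" by auto
  have ni: "norm i = 1" using i by auto
  obtain d where d: "d > 0" "ball ys d \<subseteq> ball c r" using ysb open_ball open_contains_ball by blast
  define \<phi> where "\<phi> t = F (ys + t *\<^sub>R i)" for t
  define \<psi> where "\<psi> t = blinfun_apply (D (ys + t *\<^sub>R i)) i - 2 * \<epsilon> * inner (ys + t *\<^sub>R i - c) i" for t
  have inb: "ys + t *\<^sub>R i \<in> ball c r" if "\<bar>t\<bar> < d" for t
  proof -
    have "dist ys (ys + t *\<^sub>R i) < d" using that ni by (simp add: dist_norm)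
    then show ?thesis using d by auto
  qed
  have der\<phi>: "DERIV \<phi> t :> \<psi> t" if "\<bar>t\<bar> < d" for t
  proof -
    have h1: "((\<lambda>t. ys + t *\<^sub>R i) has_derivative (\<lambda>s. s *\<^sub>R i)) (at t)"
      by (auto intro!: derivative_eq_intros)
    have h2: "((\<lambda>t. H (ys + t *\<^sub>R i)) has_derivative (\<lambda>s. blinfun_apply (D (ys + t *\<^sub>R i)) (s *\<^sub>R i))) (at t)"
      using has_derivative_compose[OF h1 f(1)[rule_format, OF inb[OF that]]] .
    have h3: "((\<lambda>t. \<epsilon> * (norm (ys + t *\<^sub>R i - c))^2) has_derivative
        (\<lambda>s. \<epsilon> * (2 * inner (ys + t *\<^sub>R i - c) (s *\<^sub>R i)))) (at t)"
      unfolding power2_norm_eq_inner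
      by (auto intro!: derivative_eq_intros simp: inner_commute)
    have "(\<phi> has_derivative (\<lambda>s. blinfun_apply (D (ys + t *\<^sub>R i)) (s *\<^sub>R i) -
       \<epsilon> * (2 * inner (ys + t *\<^sub>R i - c) (s *\<^sub>R i)))) (at t)"
      unfolding \<phi>_def F_def using has_derivative_diff[OF h2 h3] by simp
    then show ?thesis unfolding has_field_derivative_def \<psi>_def
      by (rule has_derivative_eq_rhs) (auto simp: fun_eq_iff blinfun.scaleR_right algebra_simps)
  qed
  have "\<psi> 0 = 0"
  proof (rule DERIV_local_min[OF der\<phi>[of 0] d(1)])
    show "\<bar>0::real\<bar> < d" using d by simp
    show "\<forall>y. \<bar>0 - y\<bar> < d \<longrightarrow> \<phi> 0 \<le> \<phi> y"
      using ys(2) inb by (force simp: \<phi>_def)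
  qed
  have der\<psi>: "DERIV \<psi> 0 :> blinfun_apply (blinfun_apply (D2 ys) i) i - 2 * \<epsilon>"
  proof -
    have h1: "((\<lambda>t. ys + t *\<^sub>R i) has_derivative (\<lambda>s. s *\<^sub>R i)) (at 0)"
      by (auto intro!: derivative_eq_intros)
    have h2: "((\<lambda>t. D (ys + t *\<^sub>R i)) has_derivative (\<lambda>s. blinfun_apply (D2 ys) (s *\<^sub>R i))) (at 0)"
      using has_derivative_compose[OF h1, of D] f(2) ysb by simp
    have h3: "((\<lambda>t. blinfun_apply (D (ys + t *\<^sub>R i)) i) has_derivative (\<lambda>s. blinfun_apply (blinfun_apply (D2 ys) (s *\<^sub>R i)) i)) (at 0)"
      using blinfun.FDERIV[OF h2 has_derivative_const[of i]] by simp
    have h4: "((\<lambda>t. 2 * \<epsilon> * inner (ys + t *\<^sub>R i - c) i) has_derivative (\<lambda>s. 2 * \<epsilon> * inner (s *\<^sub>R i) i)) (at 0)"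
      by (auto intro!: derivative_eq_intros)
    show ?thesis unfolding has_field_derivative_def \<psi>_def
      using has_derivative_diff[OF h3 h4] 
      by (rule has_derivative_eq_rhs) (auto simp: fun_eq_iff blinfun.scaleR_left blinfun.scaleR_right scaleR_blinfun.rep_eq inner_Basis i(1) algebra_simps)
  qed
  obtain d' where d': "d' > 0" "\<forall>h>0. h < d' \<longrightarrow> \<psi> 0 > \<psi> (0 + h)"
    using DERIV_neg_dec_right[OF der\<psi>] i(2) \<epsilon> by force
  define h where "h = min d d' / 2"
  have h: "0 < h" "h < d" "h < d'" using d d' by (auto simp: h_def)
  obtain z where z: "0 < z" "z < h" "\<phi> h - \<phi> 0 = (h - 0) * \<psi> z"
    using MVT2[of 0 h \<phi> \<psi>] der\<phi> h by auto
  have "\<psi> z < 0" using d'(2) z h \<open>\<psi> 0 = 0\<close> by force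
  then have "h * \<psi> z < 0" using h by (simp add: mult_pos_neg)
  then have "\<phi> h < \<phi> 0" using z by simp
  moreover have "\<phi> 0 \<le> \<phi> h" using ys(2) inb[of h] h by (auto simp: \<phi>_def)
  ultimately show False by simp
qed

lemma usc_continuous:
  assumes "continuous_on U f"
  shows "usc_on U (\<lambda>x. ereal (f x))"
  unfolding usc_on_def
proof (intro ballI allI impI)
  fix x c assume x: "x \<in> U" and c: "ereal (f x) < c"
  have "((\<lambda>x. ereal (f x)) \<longlongrightarrow> ereal (f x)) (at x within U)"
    using assms x by (intro tendsto_intros) (simp add: continuous_on_def)
  then show "\<forall>\<^sub>F y in at x within U. ereal (f y) < c"
    using c order_tendstoD(2) by blast
qed

lemma harmonic_quad:
  fixes e a :: "'a::euclidean_space"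
  assumes e: "norm e = 1"
  shows "harmonic_on U (\<lambda>w. real DIM('a) * (inner (w - a) e)^2 - (norm (w - a))^2)"
proof -
  define n where "n = real DIM('a)"
  define A where "A = blinfun_inner_left e"
  define Q where "Q = Blinfun (\<lambda>u. (2 * n * inner u e) *\<^sub>R A - 2 *\<^sub>R blinfun_inner_left u)"
  have blQ: "bounded_linear (\<lambda>u. (2 * n * inner u e) *\<^sub>R A - 2 *\<^sub>R blinfun_inner_left u)"
    by (intro bounded_linear_intros)
  have Qa: "blinfun_apply Q = (\<lambda>u. (2 * n * inner u e) *\<^sub>R A - 2 *\<^sub>R blinfun_inner_left u)"
    unfolding Q_def using blQ by (rule bounded_linear_Blinfun_apply)
  show ?thesis unfolding harmonic_on_def n_def[symmetric]
  proof (intro exI[of _ "\<lambda>w. (2 * n * inner (w - a) e) *\<^sub>R A - 2 *\<^sub>R blinfun_inner_left (w - a)"]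
      exI[of _ "\<lambda>w. Q"] conjI ballI)
    fix x
    show "((\<lambda>w. n * (inner (w - a) e)^2 - (norm (w - a))^2) has_derivative
       blinfun_apply ((2 * n * inner (x - a) e) *\<^sub>R A - 2 *\<^sub>R blinfun_inner_left (x - a))) (at x)"
      unfolding power2_norm_eq_inner
      by (auto intro!: derivative_eq_intros simp: A_def fun_eq_iff plus_blinfun.rep_eq scaleR_blinfun.rep_eq
          minus_blinfun.rep_eq inner_diff_left inner_diff_right algebra_simps inner_commute)
    show "((\<lambda>w. (2 * n * inner (w - a) e) *\<^sub>R A - 2 *\<^sub>R blinfun_inner_left (w - a)) has_derivative
       blinfun_apply Q) (at x)"
      unfolding Qa
      by (auto intro!: derivative_eq_intros bounded_linear.has_derivative[OF bounded_linear_blinfun_inner_left]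
          simp: algebra_simps)
    have "(\<Sum>i\<in>Basis. blinfun_apply (blinfun_apply Q i) i) = (\<Sum>i\<in>Basis. 2 * n * (inner i e * inner i e) - 2)"
      by (intro sum.cong refl) (simp add: Qa A_def minus_blinfun.rep_eq scaleR_blinfun.rep_eq)
    also have "\<dots> = 2 * n * (\<Sum>i\<in>Basis. inner e i * inner e i) - 2 * n"
      by (simp add: sum_subtractf sum_distrib_left n_def inner_commute)
    also have "(\<Sum>i\<in>Basis. inner e i * inner e i) = inner e e"
      by (simp add: euclidean_inner[of e e])
    finally show "(\<Sum>i\<in>Basis. blinfun_apply (blinfun_apply Q i) i) = 0"
      using e by (simp add: power2_norm_eq_inner[symmetric])
  qed simp
qed

lemma subharmonic_affine:
  fixes l :: "'a::euclidean_space \<Rightarrow> real"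
  assumes l: "linear l"
  shows "subharmonic_on U (\<lambda>x. ereal (a + l x))"
  unfolding subharmonic_on_def
proof (intro conjI allI impI ballI)
  have bl: "bounded_linear l" using l by (simp add: linear_conv_bounded_linear)
  show "usc_on U (\<lambda>x. ereal (a + l x))"
    using bl by (intro usc_continuous continuous_intros) (simp add: linear_continuous_on)
  fix x r h y
  assume r: "0 < r" and sub: "cball x r \<subseteq> U" and hc: "continuous_on (cball x r) h"
    and hh: "harmonic_on (ball x r) h" and le: "\<forall>y\<in>sphere x r. ereal (a + l y) \<le> ereal (h y)"
    and y: "y \<in> cball x r"
  have lin: "linear (\<lambda>y. - l y)" by (rule linearI) (auto simp: linear_add[OF l] linear_scale[OF l])
  have "harmonic_on (ball x r) (\<lambda>y. h y + (- a + - l y))"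
    by (intro harmonic_on_add hh harmonic_on_affine lin)
  moreover have "continuous_on (cball x r) (\<lambda>y. h y + (- a + - l y))"
    using hc linear_continuous_on[OF bl] by (intro continuous_intros) auto
  ultimately have "\<forall>y\<in>cball x r. 0 \<le> h y + (- a + - l y)"
    using harmonic_min_principle[OF r] le by force
  then have "0 \<le> h y + (- a + - l y)" using y by blast
  then show "ereal (a + l y) \<le> ereal (h y)" by simp
qed simp

lemma usc_attains_max:
  fixes g :: "'a::metric_space \<Rightarrow> ereal"
  assumes K: "compact K" "K \<noteq> {}"
    and usc: "\<forall>y\<in>K. \<forall>t::real. g y < ereal t \<longrightarrow> (\<exists>\<delta>>0. \<forall>y'\<in>K. dist y' y < \<delta> \<longrightarrow> g y' < ereal t)"
  shows "\<exists>y\<in>K. \<forall>z\<in>K. g z \<le> g y"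
proof (rule ccontr)
  assume nt: "\<not> ?thesis"
  define m where "m = (SUP y\<in>K. g y)"
  have lt: "\<forall>y\<in>K. g y < m"
  proof
    fix y assume y: "y \<in> K"
    have "g y \<le> m" unfolding m_def using y by (rule SUP_upper)
    moreover have "g y \<noteq> m"
    proof
      assume "g y = m"
      then have "\<forall>z\<in>K. g z \<le> g y" unfolding m_def by (auto intro: SUP_upper)
      then show False using nt y by blast
    qed
    ultimately show "g y < m" by simp
  qed
  have "\<forall>y\<in>K. \<exists>c \<delta>. g y < ereal c \<and> ereal c < m \<and> \<delta> > 0 \<and> (\<forall>y'\<in>K. dist y' y < \<delta> \<longrightarrow> g y' < ereal c)"
  proof
    fix y assume y: "y \<in> K"
    obtain c where c: "g y < ereal c" "ereal c < m" using ereal_dense2[OF lt[rule_format, OF y]] by blast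
    then show "\<exists>c \<delta>. g y < ereal c \<and> ereal c < m \<and> \<delta> > 0 \<and> (\<forall>y'\<in>K. dist y' y < \<delta> \<longrightarrow> g y' < ereal c)"
      using usc y by blast
  qed
  then obtain c \<delta> where cd: "\<forall>y\<in>K. g y < ereal (c y) \<and> ereal (c y) < m \<and> \<delta> y > 0 \<and>
      (\<forall>y'\<in>K. dist y' y < \<delta> y \<longrightarrow> g y' < ereal (c y))"
    by metis
  have "K \<subseteq> (\<Union>y\<in>K. ball y (\<delta> y))" using cd by force
  then obtain K' where K': "K' \<subseteq> K" "finite K'" "K \<subseteq> (\<Union>y\<in>K'. ball y (\<delta> y))"
    using compactE_image[OF K(1), of K "\<lambda>y. ball y (\<delta> y)"] by blast
  have "K' \<noteq> {}" using K' K(2) by auto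
  define C where "C = Max (c ` K')"
  have Cm: "ereal C < m"
  proof -
    have "C \<in> c ` K'" unfolding C_def using K' \<open>K' \<noteq> {}\<close> by (intro Max_in) auto
    then show ?thesis using cd K' by auto
  qed
  have "\<forall>z\<in>K. g z \<le> ereal C"
  proof
    fix z assume z: "z \<in> K"
    then obtain y where y: "y \<in> K'" "z \<in> ball y (\<delta> y)" using K' by auto
    then have "g z < ereal (c y)" using cd K' z by (auto simp: dist_commute)
    moreover have "c y \<le> C" unfolding C_def using y K' by (intro Max_ge) auto
    ultimately show "g z \<le> ereal C" by (meson ereal_less_eq(3) less_imp_le order_trans)
  qed
  then have "m \<le> ereal C" unfolding m_def by (simp add: SUP_le_iff)
  then show False using Cm by simp
qed

lemma ereal_diff_less_iff: "(x::ereal) - ereal a < ereal t \<longleftrightarrow> x < ereal (a + t)"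
  by (cases x) auto

lemma ereal_diff_le_iff: "(x::ereal) - ereal a \<le> ereal t \<longleftrightarrow> x \<le> ereal (a + t)"
  by (cases x) auto

lemma quad_bounds:
  fixes n s :: real
  assumes n: "n \<ge> 1" and s: "-1 \<le> s" "s \<le> 1"
  shows "n * s^2 + (n - 1/2) * s - 1/2 \<le> 2 * n"
    and "s < 1 / (2 * n) \<Longrightarrow> n * s^2 + (n - 1/2) * s - 1/2 \<le> 0"
proof -
  have fact: "n * s^2 + (n - 1/2) * s - 1/2 = n * ((s + 1) * (s - 1 / (2 * n)))"
    using n by (simp add: field_simps power2_eq_square)
  have "0 < 1 / (2 * n)" using n by simp
  have "(s + 1) * (s - 1 / (2 * n)) \<le> 2"
  proof (cases "s - 1 / (2 * n) \<le> 0")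
    case True
    have "(s + 1) * (s - 1 / (2 * n)) \<le> 0" using True s by (intro mult_nonneg_nonpos) auto
    then show ?thesis by linarith
  next
    case False
    have "(s + 1) * (s - 1 / (2 * n)) \<le> 2 * 1"
      by (intro mult_mono) (use False s \<open>0 < 1 / (2 * n)\<close> in linarith)+
    then show ?thesis by simp
  qed
  then have "n * ((s + 1) * (s - 1 / (2 * n))) \<le> n * 2" using n by (intro mult_left_mono) auto
  then show "n * s^2 + (n - 1/2) * s - 1/2 \<le> 2 * n" unfolding fact by simp
  assume "s < 1 / (2 * n)"
  then have "(s + 1) * (s - 1 / (2 * n)) \<le> 0" using s by (intro mult_nonneg_nonpos) auto
  then show "n * s^2 + (n - 1/2) * s - 1/2 \<le> 0" unfolding fact using n
    by (simp add: mult_nonneg_nonpos)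
qed

lemma sub_usc_point:
  fixes f :: "'a::euclidean_space \<Rightarrow> ereal" and H :: "'a \<Rightarrow> real"
  assumes sub: "subharmonic_on V f" and V: "open V" and D: "open D" "D \<subseteq> V"
    and Hc: "continuous_on (closure D) H"
    and y: "y \<in> D" and lt: "f y < ereal (H y + t)"
  shows "\<exists>\<delta>>0. \<forall>y'. dist y' y < \<delta> \<longrightarrow> y' \<in> D \<and> f y' < ereal (H y' + t)"
proof -
  obtain c where c: "f y < ereal c" "ereal c < ereal (H y + t)" using ereal_dense2[OF lt] by blast
  define \<eta> where "\<eta> = H y + t - c"
  have \<eta>: "\<eta> > 0" using c by (simp add: \<eta>_def)
  have usc: "usc_on V f" using sub by (simp add: subharmonic_on_def)
  have "\<forall>\<^sub>F y' in at y within V. f y' < ereal c" using usc y D c(1) unfolding usc_on_def by blast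
  then obtain d1 where d1: "d1 > 0" "\<forall>y'\<in>V. y' \<noteq> y \<and> dist y' y < d1 \<longrightarrow> f y' < ereal c"
    unfolding eventually_at by blast
  have "y \<in> interior (closure D)" using y D(1) interior_maximal closure_subset by blast
  then have "isCont H y" using Hc continuous_on_interior by blast
  then obtain d2 where d2: "d2 > 0" "\<forall>y'. dist y' y < d2 \<longrightarrow> dist (H y') (H y) < \<eta>"
    using \<eta> unfolding continuous_at_eps_delta by blast
  obtain d3 where d3: "d3 > 0" "ball y d3 \<subseteq> D" using D(1) y open_contains_ball by blast
  show ?thesis
  proof (intro exI[of _ "min d1 (min d2 d3)"] conjI allI impI)
    show "min d1 (min d2 d3) > 0" using d1 d2 d3 by simp
    fix y' assume dy: "dist y' y < min d1 (min d2 d3)"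
    show yD: "y' \<in> D" using dy d3 by (auto simp: dist_commute)
    have "f y' < ereal c"
    proof (cases "y' = y")
      case True then show ?thesis using c by simp
    next
      case False then show ?thesis using d1 dy yD D by auto
    qed
    moreover have "c \<le> H y' + t" using d2 dy unfolding \<eta>_def dist_real_def by force
    ultimately show "f y' < ereal (H y' + t)" by (meson ereal_less_eq(3) less_le_trans)
  qed
qed

lemma sub_level_compact:
  fixes f :: "'a::euclidean_space \<Rightarrow> ereal" and H :: "'a \<Rightarrow> real"
  assumes sub: "subharmonic_on V f" and V: "open V" and D: "open D" "bounded D" "D \<subseteq> V"
    and Hc: "continuous_on (closure D) H"
    and bd: "\<forall>y\<in>frontier D. \<forall>\<epsilon>>0. \<exists>\<delta>>0. \<forall>y'\<in>D. dist y' y < \<delta> \<longrightarrow> f y' \<le> ereal (H y' + \<epsilon>)"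
    and t: "t > 0"
  shows "compact {y\<in>D. ereal (H y + t) \<le> f y}"
proof (subst compact_eq_bounded_closed, rule conjI)
  show "bounded {y\<in>D. ereal (H y + t) \<le> f y}" using D(2) by (rule bounded_subset) auto
  show "closed {y\<in>D. ereal (H y + t) \<le> f y}"
    unfolding closed_limpt
  proof (intro allI impI)
    fix y assume lp: "y islimpt {y\<in>D. ereal (H y + t) \<le> f y}"
    have yc: "y \<in> closure D"
      using lp closure_def closure_mono[of "{y\<in>D. ereal (H y + t) \<le> f y}" D] by blast
    show "y \<in> {y\<in>D. ereal (H y + t) \<le> f y}"
    proof (cases "y \<in> D")
      case True
      show ?thesis
      proof (rule ccontr)
        assume "y \<notin> {y\<in>D. ereal (H y + t) \<le> f y}"
        then have "f y < ereal (H y + t)" using True by auto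
        then obtain \<delta> where \<delta>: "\<delta> > 0" "\<forall>y'. dist y' y < \<delta> \<longrightarrow> y' \<in> D \<and> f y' < ereal (H y' + t)"
          using sub_usc_point[OF sub V D(1) D(3) Hc True] by blast
        then obtain x' where "x' \<in> {y\<in>D. ereal (H y + t) \<le> f y}" "dist x' y < \<delta>"
          using lp unfolding islimpt_approachable by blast
        then show False using \<delta> by force
      qed
    next
      case False
      then have "y \<in> frontier D" using yc D(1) by (simp add: frontier_def interior_open)
      moreover have "t / 2 > 0" using t by simp
      ultimately obtain \<delta> where \<delta>: "\<delta> > 0" "\<forall>y'\<in>D. dist y' y < \<delta> \<longrightarrow> f y' \<le> ereal (H y' + t / 2)"
        using bd by blast
      then obtain x' where x': "x' \<in> {y\<in>D. ereal (H y + t) \<le> f y}" "dist x' y < \<delta>"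
        using lp unfolding islimpt_approachable by blast
      then have "ereal (H x' + t) \<le> f x'" "f x' \<le> ereal (H x' + t / 2)" using \<delta> by auto
      then have "ereal (H x' + t) \<le> ereal (H x' + t / 2)" by (rule order_trans)
      then show ?thesis using t by simp
    qed
  qed
qed

lemma harmonic_on_const: "harmonic_on U (\<lambda>x::'a::euclidean_space. c)"
  using harmonic_on_affine[of "\<lambda>x::'a. 0" U c] by (simp add: linear_zero)

lemma sub_max_principle:
  fixes f :: "'a::euclidean_space \<Rightarrow> ereal" and H :: "'a \<Rightarrow> real"
  assumes sub: "subharmonic_on V f" and V: "open V" and D: "open D" "bounded D" "D \<subseteq> V"
    and Hc: "continuous_on (closure D) H" and Hh: "harmonic_on D H"
    and bd: "\<forall>y\<in>frontier D. \<forall>\<epsilon>>0. \<exists>\<delta>>0. \<forall>y'\<in>D. dist y' y < \<delta> \<longrightarrow> f y' \<le> ereal (H y' + \<epsilon>)"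
  shows "\<forall>y\<in>D. f y \<le> ereal (H y)"
proof (rule ccontr)
  assume "\<not> ?thesis"
  then obtain y0 where y0: "y0 \<in> D" "\<not> f y0 \<le> ereal (H y0)" by auto
  have fin: "f y0 < \<infinity>" using sub y0 D(3) by (auto simp: subharmonic_on_def)
  obtain r0 where r0: "f y0 = ereal r0" using y0 fin by (cases "f y0") auto
  define t0 where "t0 = r0 - H y0"
  have t0: "t0 > 0" using y0 r0 by (simp add: t0_def)
  define K where "K = {y\<in>D. ereal (H y + t0/2) \<le> f y}"
  have Kc: "compact K" unfolding K_def by (rule sub_level_compact[OF sub V D Hc bd]) (use t0 in simp)
  have "t0 / 2 \<le> t0" using t0 by simp
  moreover have "H y0 + t0 = r0" by (simp add: t0_def)
  ultimately have "H y0 + t0 / 2 \<le> r0" by linarith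
  then have y0K: "y0 \<in> K" using y0 r0 by (simp add: K_def)
  define g where "g y = f y - ereal (H y)" for y
  have usc_g: "\<forall>y\<in>S. \<forall>t::real. g y < ereal t \<longrightarrow> (\<exists>\<delta>>0. \<forall>y'\<in>S. dist y' y < \<delta> \<longrightarrow> g y' < ereal t)"
    if S: "S \<subseteq> D" for S
  proof (intro ballI allI impI)
    fix y t assume y: "y \<in> S" and lt: "g y < ereal t"
    then have "f y < ereal (H y + t)" unfolding g_def by (simp add: ereal_diff_less_iff)
    then obtain \<delta> where "\<delta>>0" "\<forall>y'. dist y' y < \<delta> \<longrightarrow> y' \<in> D \<and> f y' < ereal (H y' + t)"
      using sub_usc_point[OF sub V D(1) D(3) Hc, of y t] y S by blast
    then show "\<exists>\<delta>>0. \<forall>y'\<in>S. dist y' y < \<delta> \<longrightarrow> g y' < ereal t"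
      unfolding g_def by (auto simp: ereal_diff_less_iff)
  qed
  obtain ys where ys: "ys \<in> K" "\<forall>z\<in>K. g z \<le> g ys"
    using usc_attains_max[OF Kc _ usc_g[of K]] y0K K_def by blast
  have "g y0 = ereal t0" using r0 by (simp add: g_def t0_def)
  then have gys: "ereal t0 \<le> g ys" using ys y0K by metis
  have "f ys < \<infinity>" using sub ys D(3) K_def by (auto simp: subharmonic_on_def)
  then obtain M where M: "g ys = ereal M" using gys unfolding g_def by (cases "f ys") auto
  have Mt0: "t0 \<le> M" using gys M by simp
  have gle: "\<forall>y\<in>D. f y \<le> ereal (H y + M)"
  proof
    fix y assume y: "y \<in> D"
    show "f y \<le> ereal (H y + M)"
    proof (cases "y \<in> K")
      case True then have "g y \<le> ereal M" using ys M by metis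
      then show ?thesis unfolding g_def by (simp add: ereal_diff_le_iff)
    next
      case False
      then have "f y < ereal (H y + t0/2)" using y K_def by auto
      moreover have "ereal (H y + t0/2) \<le> ereal (H y + M)" using Mt0 t0 by simp
      ultimately show ?thesis by (meson less_imp_le order_trans)
    qed
  qed
  define Mset where "Mset = {y\<in>D. ereal (H y + M) \<le> f y}"
  have Mc: "compact Mset" unfolding Mset_def
    by (rule sub_level_compact[OF sub V D Hc bd]) (use t0 Mt0 in linarith)
  have ysM: "ys \<in> Mset"
  proof -
    have "f ys = ereal (H ys + M)" using M unfolding g_def by (cases "f ys") auto
    then show ?thesis using ys K_def Mset_def by auto
  qed
  obtain e :: 'a where e: "e \<in> Basis" using nonempty_Basis by blast
  have ne: "norm e = 1" using e by simp
  have "\<exists>y\<in>Mset. \<forall>z\<in>Mset. inner z e \<le> inner y e"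
  proof (rule continuous_attains_sup[OF Mc])
    show "Mset \<noteq> {}" using ysM by auto
    show "continuous_on Mset (\<lambda>y. inner y e)" by (intro continuous_intros)
  qed
  then obtain y1 where y1: "y1 \<in> Mset" "\<forall>z\<in>Mset. inner z e \<le> inner y1 e" by blast
  have y1D: "y1 \<in> D" using y1 Mset_def by auto
  have fy1: "ereal (H y1 + M) \<le> f y1" using y1 Mset_def by auto
  obtain \<rho> where \<rho>: "\<rho> > 0" "cball y1 \<rho> \<subseteq> D" using D(1) y1D open_contains_cball by blast
  define n where "n = real DIM('a)"
  have n1: "n \<ge> 1" unfolding n_def using DIM_positive[where 'a='a] by linarith
  define s0 where "s0 = 1 / (2 * n)"
  have s0: "s0 > 0" using n1 by (simp add: s0_def)
  define C where "C = {w \<in> sphere y1 \<rho>. \<rho> * s0 \<le> inner (w - y1) e}"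
  have Cc: "compact C"
  proof -
    have "C = sphere y1 \<rho> \<inter> {w. \<rho> * s0 \<le> inner (w - y1) e}" by (auto simp: C_def)
    moreover have "closed {w. \<rho> * s0 \<le> inner (w - y1) e}"
      by (intro closed_Collect_le continuous_intros)
    ultimately show ?thesis by (simp add: compact_Int_closed)
  qed
  have CD: "C \<subseteq> D" using \<rho> by (auto simp: C_def)
  have CnotM: "\<forall>w\<in>C. f w < ereal (H w + M)"
  proof
    fix w assume w: "w \<in> C"
    have "inner (w - y1) e > 0" using w \<rho> s0 by (auto simp: C_def intro: less_le_trans[OF mult_pos_pos])
    then have "inner w e > inner y1 e" by (simp add: inner_diff_left)
    then have "w \<notin> Mset" using y1 by force
    then show "f w < ereal (H w + M)" using w CD Mset_def by auto
  qed
  obtain \<eta> where \<eta>: "\<eta> > 0" "\<forall>w\<in>C. f w \<le> ereal (H w + M - \<eta>)"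
  proof (cases "C = {}")
    case True then show ?thesis using that[of 1] by auto
  next
    case False
    obtain wm where wm: "wm \<in> C" "\<forall>z\<in>C. g z \<le> g wm"
      using usc_attains_max[OF Cc False usc_g[OF CD]] by blast
    have "g wm < ereal M" using CnotM wm unfolding g_def by (simp add: ereal_diff_less_iff)
    then obtain c where c: "g wm < ereal c" "ereal c < ereal M" using ereal_dense2 by blast
    have "\<forall>w\<in>C. f w \<le> ereal (H w + M - (M - c))"
    proof
      fix w assume "w \<in> C"
      then have "g w < ereal c" using wm c by (meson le_less_trans)
      then show "f w \<le> ereal (H w + M - (M - c))" unfolding g_def by (simp add: ereal_diff_less_iff)
    qed
    then show ?thesis using that[of "M - c"] c by simp
  qed
  define \<kappa> where "\<kappa> = \<eta> / (2 * n)"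
  have \<kappa>: "\<kappa> > 0" using \<eta> n1 by (simp add: \<kappa>_def)
  define c1 where "c1 = (n - 1/2) / \<rho>"
  define P where "P w = ((1/2 - c1 * inner y1 e) + c1 * inner w e) +
      (1/\<rho>^2) * (n * (inner (w - y1) e)^2 - (norm (w - y1))^2)" for w
  have linc1: "linear (\<lambda>w::'a. c1 * inner w e)"
    by (rule linearI) (auto simp: inner_add_left algebra_simps)
  have Pharm: "harmonic_on UNIV P"
    unfolding P_def n_def
    by (intro harmonic_on_add harmonic_on_scale harmonic_on_affine harmonic_quad ne linc1)
  have Py1: "P y1 = 1/2" by (simp add: P_def)
  have Psph: "P w = n * (inner (w - y1) e / \<rho>)^2 + (n - 1/2) * (inner (w - y1) e / \<rho>) - 1/2"
    if w: "w \<in> sphere y1 \<rho>" for w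
  proof -
    have nw: "norm (w - y1) = \<rho>" using w by (simp add: dist_norm norm_minus_commute)
    have "inner w e - inner y1 e = inner (w - y1) e" by (simp add: inner_diff_left)
    then show ?thesis unfolding P_def c1_def nw using \<rho>
      by (simp add: field_simps power2_eq_square)
  qed
  have sb: "-1 \<le> inner (w - y1) e / \<rho> \<and> inner (w - y1) e / \<rho> \<le> 1" if w: "w \<in> sphere y1 \<rho>" for w
  proof -
    have nw: "norm (w - y1) = \<rho>" using w by (simp add: dist_norm norm_minus_commute)
    have "\<bar>inner (w - y1) e\<bar> \<le> \<rho>" using Cauchy_Schwarz_ineq2[of "w - y1" e] nw ne by simp
    then show ?thesis using \<rho> by (simp add: abs_le_iff field_simps)
  qed
  define Hq where "Hq w = H w + (M + (- \<kappa>) * P w)" for w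
  have Hqh: "harmonic_on (ball y1 \<rho>) Hq"
    unfolding Hq_def
    by (intro harmonic_on_add harmonic_on_const harmonic_on_scale
        harmonic_on_subset[OF Hh] harmonic_on_subset[OF Pharm]) (use \<rho> in auto)
  have Pc: "continuous_on UNIV P" unfolding P_def by (intro continuous_intros)
  have Hqc: "continuous_on (cball y1 \<rho>) Hq"
    unfolding Hq_def
    by (intro continuous_intros continuous_on_subset[OF Hc] continuous_on_subset[OF Pc])
      (use \<rho> closure_subset in auto)
  have sph: "\<forall>w\<in>sphere y1 \<rho>. f w \<le> ereal (Hq w)"
  proof
    fix w assume w: "w \<in> sphere y1 \<rho>"
    have wD: "w \<in> D" using w \<rho> by auto
    show "f w \<le> ereal (Hq w)"
    proof (cases "\<rho> * s0 \<le> inner (w - y1) e")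
      case True
      then have "w \<in> C" using w by (simp add: C_def)
      then have fw: "f w \<le> ereal (H w + M - \<eta>)" using \<eta> by blast
      have "P w \<le> 2 * n"
        by (subst Psph[OF w]) (rule quad_bounds(1)[OF n1 conjunct1[OF sb[OF w]] conjunct2[OF sb[OF w]]])
      then have "\<kappa> * P w \<le> \<kappa> * (2 * n)" using \<kappa> by (intro mult_left_mono) auto
      also have "\<kappa> * (2 * n) = \<eta>" using n1 by (simp add: \<kappa>_def)
      finally have "H w + M - \<eta> \<le> Hq w" by (simp add: Hq_def)
      then show ?thesis using fw by (meson ereal_less_eq(3) order_trans)
    next
      case False
      then have "inner (w - y1) e / \<rho> < s0" using \<rho> by (simp add: pos_divide_less_eq mult.commute)
      then have "P w \<le> 0"
        by (subst Psph[OF w]) (rule quad_bounds(2)[OF n1 conjunct1[OF sb[OF w]] conjunct2[OF sb[OF w]]], simp add: s0_def)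
      then have "0 \<le> (- \<kappa>) * P w" using \<kappa> by (intro mult_nonpos_nonpos) auto
      then have "H w + M \<le> Hq w" by (simp add: Hq_def)
      then show ?thesis using gle wD by (meson ereal_less_eq(3) order_trans)
    qed
  qed
  have "cball y1 \<rho> \<subseteq> V" using \<rho> D by auto
  then have "\<forall>y\<in>cball y1 \<rho>. f y \<le> ereal (Hq y)"
    using sub \<rho>(1) Hqc Hqh sph unfolding subharmonic_on_def by blast
  then have "f y1 \<le> ereal (Hq y1)" using \<rho> by auto
  then have "ereal (H y1 + M) \<le> ereal (Hq y1)" using fy1 by (rule order_trans[rotated])
  then show False using \<kappa> Py1 by (simp add: Hq_def)
qed

lemma C2_sphere_barriers:
  fixes \<phi> :: "oct \<times> oct \<Rightarrow> real"
  assumes "C2_on_sphere \<phi>"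
  shows "\<exists>L>0. \<exists>hup glow.
    (\<forall>\<zeta>\<in>sphere 0 1. \<exists>\<alpha> \<beta>. linear \<beta> \<and> (\<forall>q. hup \<zeta> q = \<alpha> + \<beta> q)) \<and>
    (\<forall>\<zeta>\<in>sphere 0 1. \<exists>\<alpha> \<beta>. linear \<beta> \<and> (\<forall>q. glow \<zeta> q = \<alpha> + \<beta> q)) \<and>
    (\<forall>\<zeta>\<in>sphere 0 1. \<forall>q\<in>sphere 0 1. glow \<zeta> q \<le> \<phi> q \<and> \<phi> q \<le> hup \<zeta> q) \<and>
    (\<forall>\<zeta>\<in>sphere 0 1. \<forall>q. hup \<zeta> q \<le> \<phi> \<zeta> + L * dist q \<zeta> \<and> \<phi> \<zeta> - L * dist q \<zeta> \<le> glow \<zeta> q) \<and>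
    (\<forall>\<zeta>\<in>sphere 0 1. \<forall>x y. \<bar>glow \<zeta> x - glow \<zeta> y\<bar> \<le> L * dist x y) \<and>
    (\<forall>\<zeta>\<in>sphere 0 1. glow \<zeta> \<zeta> = \<phi> \<zeta>)"
proof -
  define S where "S = sphere (0::oct\<times>oct) 1"
  obtain U \<Phi> where U: "open U" "S \<subseteq> U" "C2_on U \<Phi>" "\<forall>z\<in>S. \<Phi> z = \<phi> z"
    using assms unfolding C2_on_sphere_def S_def by blast
  obtain D D2 where DD: "\<forall>x\<in>U. (\<Phi> has_derivative blinfun_apply (D x)) (at x)"
      "\<forall>x\<in>U. (D has_derivative blinfun_apply (D2 x)) (at x)" "continuous_on U D2"
    using U(3) unfolding C2_on_def by blast
  have cS: "compact S" unfolding S_def by simp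
  obtain e where e: "e > 0" "(\<Union>x\<in>S. ball x e) \<subseteq> U"
    using compact_subset_open_imp_ball_epsilon_subset[OF cS U(1) U(2)] by blast
  define K0 where "K0 = {x + y |x y. x \<in> S \<and> y \<in> cball 0 (e/2)}"
  have cK0: "compact K0" unfolding K0_def by (intro compact_sums cS compact_cball)
  have K0U: "K0 \<subseteq> U"
  proof
    fix z assume "z \<in> K0"
    then obtain x y where "z = x + y" "x \<in> S" "y \<in> cball 0 (e/2)" by (auto simp: K0_def)
    then have "z \<in> ball x e" using e by (auto simp: dist_norm)
    then show "z \<in> U" using e \<open>x \<in> S\<close> by blast
  qed
  have "compact (D2 ` K0)"
    by (rule compact_continuous_image[OF continuous_on_subset[OF DD(3) K0U] cK0])
  then obtain M2' where M2': "\<forall>y\<in>K0. norm (D2 y) \<le> M2'"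
    using compact_imp_bounded bounded_iff by (metis image_eqI)
  define M2 where "M2 = max M2' 0"
  have M2: "\<forall>y\<in>K0. norm (D2 y) \<le> M2" "M2 \<ge> 0" using M2' by (auto simp: M2_def)
  have contD: "continuous_on S D"
    using DD(2) U(2) by (intro continuous_at_imp_continuous_on ballI has_derivative_continuous) blast
  have contPhi: "continuous_on S \<Phi>"
    using DD(1) U(2) by (intro continuous_at_imp_continuous_on ballI has_derivative_continuous) blast
  obtain M1' where M1': "\<forall>y\<in>S. norm (D y) \<le> M1'"
    using compact_imp_bounded[OF compact_continuous_image[OF contD cS]] bounded_iff by (metis image_eqI)
  define M1 where "M1 = max M1' 0"
  have M1: "\<forall>y\<in>S. norm (D y) \<le> M1" "M1 \<ge> 0" using M1' by (auto simp: M1_def)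
  obtain M0' where M0': "\<forall>y\<in>S. norm (\<Phi> y) \<le> M0'"
    using compact_imp_bounded[OF compact_continuous_image[OF contPhi cS]] bounded_iff by (metis image_eqI)
  define M0 where "M0 = max M0' 0"
  have M0: "\<forall>y\<in>S. \<bar>\<Phi> y\<bar> \<le> M0" "M0 \<ge> 0" using M0' by (auto simp: M0_def)
  define K where "K = M2 + (2 * M0 + 2 * M1) * 4 / e^2"
  have K0pos: "K \<ge> 0" using M0 M1 M2 e by (simp add: K_def)
  have taylor: "\<bar>\<Phi> q - \<Phi> \<zeta> - D \<zeta> (q - \<zeta>)\<bar> \<le> K * (norm (q - \<zeta>))^2"
    if \<zeta>: "\<zeta> \<in> S" and q: "q \<in> S" for \<zeta> q
  proof (cases "norm (q - \<zeta>) \<le> e / 2")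
    case True
    have segK: "closed_segment \<zeta> q \<subseteq> K0"
    proof
      fix z assume "z \<in> closed_segment \<zeta> q"
      then have "norm (z - \<zeta>) \<le> norm (q - \<zeta>)" by (rule segment_bound1)
      then have "z - \<zeta> \<in> cball 0 (e/2)" using True by simp
      then show "z \<in> K0" unfolding K0_def using \<zeta>
        by (intro CollectI exI[of _ \<zeta>] exI[of _ "z - \<zeta>"]) auto
    qed
    have Dbd: "norm (D y - D \<zeta>) \<le> M2 * norm (q - \<zeta>)" if y: "y \<in> closed_segment \<zeta> q" for y
    proof -
      have "norm (D y - D \<zeta>) \<le> M2 * norm (y - \<zeta>)"
      proof (rule differentiable_bound[where f=D and f'="\<lambda>x. blinfun_apply (D2 x)" and B=M2 and x=y and y=\<zeta>
          and S="closed_segment \<zeta> q", OF convex_closed_segment])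
        fix x assume x: "x \<in> closed_segment \<zeta> q"
        have xU: "x \<in> U" using segK K0U x by blast
        show "(D has_derivative blinfun_apply (D2 x)) (at x within closed_segment \<zeta> q)"
          by (rule has_derivative_at_withinI[OF bspec[OF DD(2) xU]])
        have "norm (D2 x) \<le> M2" using M2(1) segK x by blast
        moreover have "onorm (blinfun_apply (D2 x)) = norm (D2 x)" by (rule norm_blinfun.rep_eq[symmetric])
        ultimately show "onorm (blinfun_apply (D2 x)) \<le> M2" by simp
      qed (use y in auto)
      also have "\<dots> \<le> M2 * norm (q - \<zeta>)"
        using segment_bound1[OF y] M2(2) by (intro mult_left_mono) auto
      finally show ?thesis .
    qed
    have "norm ((\<Phi> q - D \<zeta> q) - (\<Phi> \<zeta> - D \<zeta> \<zeta>)) \<le> (M2 * norm (q - \<zeta>)) * norm (q - \<zeta>)"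
    proof (rule differentiable_bound[where f="\<lambda>y. \<Phi> y - D \<zeta> y" and f'="\<lambda>x. blinfun_apply (D x - D \<zeta>)"
        and B="M2 * norm (q - \<zeta>)" and x=q and y=\<zeta> and S="closed_segment \<zeta> q", OF convex_closed_segment])
      fix x assume x: "x \<in> closed_segment \<zeta> q"
      have xU: "x \<in> U" using segK K0U x by blast
      have dd: "((\<lambda>y. \<Phi> y - D \<zeta> y) has_derivative (\<lambda>v. D x v - D \<zeta> v)) (at x)"
        by (rule has_derivative_diff[OF DD(1)[rule_format, OF xU]
            bounded_linear_imp_has_derivative[OF blinfun.bounded_linear_right]])
      have eq: "blinfun_apply (D x - D \<zeta>) = (\<lambda>v. D x v - D \<zeta> v)"
        by (simp add: minus_blinfun.rep_eq fun_eq_iff)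
      show "((\<lambda>y. \<Phi> y - D \<zeta> y) has_derivative blinfun_apply (D x - D \<zeta>)) (at x within closed_segment \<zeta> q)"
        unfolding eq by (rule has_derivative_at_withinI[OF dd])
      have "onorm (blinfun_apply (D x - D \<zeta>)) = norm (D x - D \<zeta>)" by (rule norm_blinfun.rep_eq[symmetric])
      then show "onorm (blinfun_apply (D x - D \<zeta>)) \<le> M2 * norm (q - \<zeta>)"
        using Dbd[OF x] by simp
    qed auto
    moreover have "(\<Phi> q - D \<zeta> q) - (\<Phi> \<zeta> - D \<zeta> \<zeta>) = \<Phi> q - \<Phi> \<zeta> - D \<zeta> (q - \<zeta>)"
      by (simp add: blinfun.diff_right)
    ultimately have "\<bar>\<Phi> q - \<Phi> \<zeta> - D \<zeta> (q - \<zeta>)\<bar> \<le> M2 * (norm (q - \<zeta>))^2"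
      by (simp add: power2_eq_square mult.assoc)
    also have "\<dots> \<le> K * (norm (q - \<zeta>))^2"
      using M0 M1 e by (intro mult_right_mono) (auto simp: K_def)
    finally show ?thesis .
  next
    case False
    have nq: "norm q = 1" "norm \<zeta> = 1" using q \<zeta> by (auto simp: S_def)
    have "norm (q - \<zeta>) \<le> 2" using norm_triangle_ineq4[of q \<zeta>] nq by simp
    have "\<bar>D \<zeta> (q - \<zeta>)\<bar> \<le> M1 * 2"
    proof -
      have "\<bar>D \<zeta> (q - \<zeta>)\<bar> \<le> norm (D \<zeta>) * norm (q - \<zeta>)" using norm_blinfun[of "D \<zeta>" "q - \<zeta>"] by simp
      also have "\<dots> \<le> M1 * 2" using M1 \<zeta> \<open>norm (q - \<zeta>) \<le> 2\<close> by (intro mult_mono) auto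
      finally show ?thesis .
    qed
    moreover have "\<bar>\<Phi> q\<bar> \<le> M0" "\<bar>\<Phi> \<zeta>\<bar> \<le> M0" using M0(1) q \<zeta> by auto
    ultimately have "\<bar>\<Phi> q - \<Phi> \<zeta> - D \<zeta> (q - \<zeta>)\<bar> \<le> 2 * M0 + 2 * M1"
      by linarith
    also have "\<dots> \<le> ((2 * M0 + 2 * M1) * 4 / e^2) * (norm (q - \<zeta>))^2"
    proof -
      have "(e / 2)^2 \<le> (norm (q - \<zeta>))^2"
        using False e by (intro power_mono) auto
      then have "e^2 / 4 \<le> (norm (q - \<zeta>))^2" by (simp add: power_divide)
      then have "1 \<le> 4 / e^2 * (norm (q - \<zeta>))^2" using e by (simp add: field_simps)
      then have "(2 * M0 + 2 * M1) * 1 \<le> (2 * M0 + 2 * M1) * (4 / e^2 * (norm (q - \<zeta>))^2)"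
        using M0 M1 by (intro mult_left_mono) auto
      then show ?thesis by (simp add: field_simps)
    qed
    also have "\<dots> \<le> K * (norm (q - \<zeta>))^2"
      using M2 by (intro mult_right_mono) (auto simp: K_def)
    finally show ?thesis .
  qed
  define L where "L = M1 + 2 * K + 1"
  have L: "L > 0" using M1 K0pos by (simp add: L_def)
  define hup where "hup \<zeta> q = \<Phi> \<zeta> + D \<zeta> (q - \<zeta>) + 2 * K * (1 - inner q \<zeta>)" for \<zeta> q
  define glow where "glow \<zeta> q = \<Phi> \<zeta> + D \<zeta> (q - \<zeta>) - 2 * K * (1 - inner q \<zeta>)" for \<zeta> q
  have sq: "2 * (1 - inner q \<zeta>) = (norm (q - \<zeta>))^2" if "q \<in> S" "\<zeta> \<in> S" for q \<zeta>
  proof -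
    have "(norm (q - \<zeta>))^2 = inner q q - 2 * inner q \<zeta> + inner \<zeta> \<zeta>"
      by (simp add: power2_norm_eq_inner inner_diff_left inner_diff_right inner_commute)
    moreover have "inner q q = 1" "inner \<zeta> \<zeta> = 1" using that by (simp_all add: S_def dot_square_norm)
    ultimately show ?thesis by simp
  qed
  have inb: "\<bar>1 - inner q \<zeta>\<bar> \<le> dist q \<zeta>" if "\<zeta> \<in> S" for q \<zeta>
  proof -
    have "1 - inner q \<zeta> = inner (\<zeta> - q) \<zeta>"
      using that by (simp add: S_def inner_diff_left dot_square_norm)
    also have "\<bar>\<dots>\<bar> \<le> norm (\<zeta> - q) * norm \<zeta>" by (rule Cauchy_Schwarz_ineq2)
    finally show ?thesis using that by (simp add: S_def dist_norm norm_minus_commute)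
  qed
  have Dq: "\<bar>D \<zeta> v\<bar> \<le> M1 * norm v" if "\<zeta> \<in> S" for \<zeta> v
  proof -
    have "\<bar>D \<zeta> v\<bar> \<le> norm (D \<zeta>) * norm v" using norm_blinfun[of "D \<zeta>" v] by simp
    also have "\<dots> \<le> M1 * norm v" using M1(1) that by (intro mult_right_mono) auto
    finally show ?thesis .
  qed
  have P1: "\<forall>\<zeta>\<in>sphere 0 1. \<exists>\<alpha> \<beta>. linear \<beta> \<and> (\<forall>q. hup \<zeta> q = \<alpha> + \<beta> q)"
  proof
    fix \<zeta> :: "oct \<times> oct"
    show "\<exists>\<alpha> \<beta>. linear \<beta> \<and> (\<forall>q. hup \<zeta> q = \<alpha> + \<beta> q)"
    proof (rule exI[of _ "\<Phi> \<zeta> - D \<zeta> \<zeta> + 2 * K"], rule exI[of _ "\<lambda>q. D \<zeta> q - 2 * K * inner q \<zeta>"], intro conjI allI)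
      show "linear (\<lambda>q. D \<zeta> q - 2 * K * inner q \<zeta>)"
        by (rule linearI) (simp_all add: blinfun.add_right blinfun.scaleR_right inner_add_left algebra_simps)
      fix q show "hup \<zeta> q = \<Phi> \<zeta> - D \<zeta> \<zeta> + 2 * K + (D \<zeta> q - 2 * K * inner q \<zeta>)"
        by (simp add: hup_def blinfun.diff_right algebra_simps)
    qed
  qed
  have P2: "\<forall>\<zeta>\<in>sphere 0 1. \<exists>\<alpha> \<beta>. linear \<beta> \<and> (\<forall>q. glow \<zeta> q = \<alpha> + \<beta> q)"
  proof
    fix \<zeta> :: "oct \<times> oct"
    show "\<exists>\<alpha> \<beta>. linear \<beta> \<and> (\<forall>q. glow \<zeta> q = \<alpha> + \<beta> q)"
    proof (rule exI[of _ "\<Phi> \<zeta> - D \<zeta> \<zeta> - 2 * K"], rule exI[of _ "\<lambda>q. D \<zeta> q + 2 * K * inner q \<zeta>"], intro conjI allI)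
      show "linear (\<lambda>q. D \<zeta> q + 2 * K * inner q \<zeta>)"
        by (rule linearI) (simp_all add: blinfun.add_right blinfun.scaleR_right inner_add_left algebra_simps)
      fix q show "glow \<zeta> q = \<Phi> \<zeta> - D \<zeta> \<zeta> - 2 * K + (D \<zeta> q + 2 * K * inner q \<zeta>)"
        by (simp add: glow_def blinfun.diff_right algebra_simps)
    qed
  qed
  have P6: "\<forall>\<zeta>\<in>sphere 0 1. glow \<zeta> \<zeta> = \<phi> \<zeta>"
    using U(4) by (simp add: glow_def S_def dot_square_norm)
  have P4: "\<forall>\<zeta>\<in>sphere 0 1. \<forall>q. hup \<zeta> q \<le> \<phi> \<zeta> + L * dist q \<zeta> \<and> \<phi> \<zeta> - L * dist q \<zeta> \<le> glow \<zeta> q"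
  proof (intro ballI allI)
    fix \<zeta> q :: "oct \<times> oct" assume \<zeta>: "\<zeta> \<in> sphere 0 1"
    then have \<zeta>S: "\<zeta> \<in> S" by (simp add: S_def)
    have a: "\<bar>D \<zeta> (q - \<zeta>)\<bar> \<le> M1 * dist q \<zeta>" using Dq[OF \<zeta>S] by (simp add: dist_norm)
    have b: "\<bar>2 * K * (1 - inner q \<zeta>)\<bar> \<le> 2 * K * dist q \<zeta>"
      using inb[OF \<zeta>S, of q] K0pos by (simp add: abs_mult mult_left_mono)
    have "(M1 + 2 * K) * dist q \<zeta> \<le> L * dist q \<zeta>" by (simp add: L_def mult_right_mono)
    then show "hup \<zeta> q \<le> \<phi> \<zeta> + L * dist q \<zeta> \<and> \<phi> \<zeta> - L * dist q \<zeta> \<le> glow \<zeta> q"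
      using a b U(4) \<zeta>S unfolding hup_def glow_def
      by (simp add: algebra_simps abs_le_iff)
  qed
  have P5: "\<forall>\<zeta>\<in>sphere 0 1. \<forall>x y. \<bar>glow \<zeta> x - glow \<zeta> y\<bar> \<le> L * dist x y"
  proof (intro ballI allI)
    fix \<zeta> x y :: "oct \<times> oct" assume \<zeta>: "\<zeta> \<in> sphere 0 1"
    then have \<zeta>S: "\<zeta> \<in> S" by (simp add: S_def)
    have "glow \<zeta> x - glow \<zeta> y = D \<zeta> (x - y) + 2 * K * inner (x - y) \<zeta>"
      by (simp add: glow_def blinfun.diff_right inner_diff_left algebra_simps)
    moreover have "\<bar>D \<zeta> (x - y)\<bar> \<le> M1 * dist x y" using Dq[OF \<zeta>S] by (simp add: dist_norm)
    moreover have "\<bar>2 * K * inner (x - y) \<zeta>\<bar> \<le> 2 * K * dist x y"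
    proof -
      have "\<bar>inner (x - y) \<zeta>\<bar> \<le> norm (x - y) * norm \<zeta>" by (rule Cauchy_Schwarz_ineq2)
      then show ?thesis using \<zeta>S K0pos by (simp add: S_def abs_mult dist_norm mult_left_mono)
    qed
    moreover have "(M1 + 2 * K) * dist x y \<le> L * dist x y" by (simp add: L_def mult_right_mono)
    ultimately show "\<bar>glow \<zeta> x - glow \<zeta> y\<bar> \<le> L * dist x y" by (simp add: algebra_simps abs_le_iff)
  qed
  have P3: "\<forall>\<zeta>\<in>sphere 0 1. \<forall>q\<in>sphere 0 1. glow \<zeta> q \<le> \<phi> q \<and> \<phi> q \<le> hup \<zeta> q"
  proof (intro ballI)
    fix \<zeta> q :: "oct \<times> oct" assume \<zeta>: "\<zeta> \<in> sphere 0 1" and q: "q \<in> sphere 0 1"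
    then have \<zeta>S: "\<zeta> \<in> S" and qS: "q \<in> S" by (auto simp: S_def)
    have t: "\<bar>\<Phi> q - \<Phi> \<zeta> - D \<zeta> (q - \<zeta>)\<bar> \<le> K * (norm (q - \<zeta>))^2" by (rule taylor[OF \<zeta>S qS])
    have s: "2 * K * (1 - inner q \<zeta>) = K * (norm (q - \<zeta>))^2" using sq[OF qS \<zeta>S] by simp
    have e1: "glow \<zeta> q = \<Phi> \<zeta> + D \<zeta> (q - \<zeta>) - K * (norm (q - \<zeta>))^2" unfolding glow_def using s by simp
    have e2: "hup \<zeta> q = \<Phi> \<zeta> + D \<zeta> (q - \<zeta>) + K * (norm (q - \<zeta>))^2" unfolding hup_def using s by simp
    have e3: "\<Phi> q = \<phi> q" using U(4) qS by simp
    have t2: "\<Phi> q - \<Phi> \<zeta> - D \<zeta> (q - \<zeta>) \<le> K * (norm (q - \<zeta>))^2"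
      "- (\<Phi> q - \<Phi> \<zeta> - D \<zeta> (q - \<zeta>)) \<le> K * (norm (q - \<zeta>))^2"
      using t by (simp_all only: abs_le_iff)
    show "glow \<zeta> q \<le> \<phi> q \<and> \<phi> q \<le> hup \<zeta> q"
      unfolding e1 e2 e3[symmetric] using t2 by linarith
  qed
  show ?thesis
    by (rule exI[of _ L], rule conjI[OF L], rule exI[of _ hup], rule exI[of _ glow]) (intro conjI P1 P2 P3 P4 P5 P6)
qed

definition lines :: "(oct \<Rightarrow> oct \<times> oct) set" where
  "lines = {l. (\<exists>p b. l = oline p b) \<or> (\<exists>p. l = vline p)}"

lemma lines_affine:
  assumes "l \<in> lines"
  shows "\<exists>c L. linear L \<and> (\<forall>x. l x = c + L x)"
proof -
  { fix p b assume l: "l = oline p b"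
    have "linear (\<lambda>x. (x, omult b x))"
      by (rule linearI) (simp_all add: linear_add[OF omult_linear] linear_scale[OF omult_linear])
    then have ?thesis using l by (intro exI[of _ p] exI[of _ "\<lambda>x. (x, omult b x)"]) (simp add: oline_def) }
  moreover
  { fix p assume l: "l = vline p"
    have "linear (\<lambda>x::oct. (0::oct, x))" by (rule linearI) simp_all
    then have ?thesis using l by (intro exI[of _ p] exI[of _ "\<lambda>x::oct. (0::oct, x)"]) (simp add: vline_def) }
  ultimately show ?thesis using assms unfolding lines_def by blast
qed

lemma lines_translate: "l \<in> lines \<Longrightarrow> (\<lambda>x. l x + h) \<in> lines"
proof -
  assume "l \<in> lines"
  then consider p b where "l = oline p b" | p where "l = vline p" by (auto simp: lines_def)
  then show ?thesis
  proof cases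
    case (1 p b)
    then have "(\<lambda>x. l x + h) = oline (p + h) b" by (auto simp: oline_def fun_eq_iff algebra_simps)
    then show ?thesis unfolding lines_def by blast
  next
    case (2 p)
    then have "(\<lambda>x. l x + h) = vline (p + h)" by (auto simp: vline_def fun_eq_iff algebra_simps)
    then show ?thesis unfolding lines_def by blast
  qed
qed

lemma lines_cont: "l \<in> lines \<Longrightarrow> continuous_on UNIV l"
proof -
  assume "l \<in> lines"
  then obtain c L where L: "linear L" "\<forall>x. l x = c + L x" using lines_affine by blast
  then have "l = (\<lambda>x. c + L x)" by auto
  moreover have "continuous_on UNIV (\<lambda>x. c + L x)"
    using L(1) by (intro continuous_intros linear_continuous_on) (simp add: linear_conv_bounded_linear)
  ultimately show ?thesis by simp
qed

lemma lines_isCont: "l \<in> lines \<Longrightarrow> isCont l x"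
  using lines_cont continuous_on_eq_continuous_at by blast

lemma vline_lines: "vline p \<in> lines" unfolding lines_def by blast

lemma OPSH_iff: "OPSH \<Omega> w \<longleftrightarrow> (\<forall>x\<in>\<Omega>. w x < \<infinity>) \<and> usc_on \<Omega> w \<and>
    (\<forall>l\<in>lines. subharmonic_on (l -` \<Omega>) (w \<circ> l))"
  unfolding OPSH_def lines_def by blast

lemma OPSH_affine:
  assumes b: "linear \<beta>"
  shows "OPSH \<Omega> (\<lambda>q. ereal (\<alpha> + \<beta> q))"
  unfolding OPSH_iff
proof (intro conjI ballI)
  show "usc_on \<Omega> (\<lambda>q. ereal (\<alpha> + \<beta> q))"
    using b by (intro usc_continuous continuous_intros linear_continuous_on) (simp add: linear_conv_bounded_linear)
  fix l assume l: "l \<in> lines"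
  then obtain c L where L: "linear L" "\<forall>x. l x = c + L x" using lines_affine by blast
  have "(\<lambda>q. ereal (\<alpha> + \<beta> q)) \<circ> l = (\<lambda>x. ereal ((\<alpha> + \<beta> c) + (\<beta> \<circ> L) x))"
    using L(2) linear_add[OF b] by (auto simp: fun_eq_iff algebra_simps)
  moreover have "subharmonic_on (l -` \<Omega>) (\<lambda>x. ereal ((\<alpha> + \<beta> c) + (\<beta> \<circ> L) x))"
    by (intro subharmonic_affine linear_compose[OF L(1) b])
  ultimately show "subharmonic_on (l -` \<Omega>) ((\<lambda>q. ereal (\<alpha> + \<beta> q)) \<circ> l)" by simp
qed simp

lemma usc_on_intro:
  fixes f :: "'a::metric_space \<Rightarrow> ereal"
  assumes "\<forall>x\<in>U. \<forall>c. f x < c \<longrightarrow> (\<exists>\<delta>>0. \<forall>y\<in>U. dist y x < \<delta> \<longrightarrow> f y < c)"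
  shows "usc_on U f"
  unfolding usc_on_def eventually_at
proof (intro ballI allI impI)
  fix x c assume "x \<in> U" "f x < c"
  then obtain \<delta> where "\<delta> > 0" "\<forall>y\<in>U. dist y x < \<delta> \<longrightarrow> f y < c" using assms by blast
  then show "\<exists>d>0. \<forall>y\<in>U. y \<noteq> x \<and> dist y x < d \<longrightarrow> f y < c" by blast
qed

lemma usc_on_openD:
  fixes f :: "'a::metric_space \<Rightarrow> ereal"
  assumes "usc_on U f" "open U" "x \<in> U" "f x < c"
  shows "\<exists>\<delta>>0. \<forall>y. dist y x < \<delta> \<longrightarrow> y \<in> U \<and> f y < c"
proof -
  have "\<forall>\<^sub>F y in at x within U. f y < c" using assms unfolding usc_on_def by blast
  then obtain d1 where d1: "d1 > 0" "\<forall>y\<in>U. y \<noteq> x \<and> dist y x < d1 \<longrightarrow> f y < c"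
    unfolding eventually_at by blast
  obtain d2 where d2: "d2 > 0" "ball x d2 \<subseteq> U" using assms(2,3) open_contains_ball by blast
  show ?thesis
  proof (intro exI[of _ "min d1 d2"] conjI allI impI)
    fix y assume y: "dist y x < min d1 d2"
    then show yU: "y \<in> U" using d2 by (auto simp: dist_commute)
    show "f y < c" using d1 y yU assms(4) by (cases "y = x") auto
  qed (use d1 d2 in auto)
qed

lemma ereal_diff_less_iff2: "(x::ereal) - ereal a < c \<longleftrightarrow> x < c + ereal a"
  by (cases x; cases c) auto

lemma subharmonic_minus_const:
  fixes f :: "'a::euclidean_space \<Rightarrow> ereal"
  assumes sub: "subharmonic_on U f"
  shows "subharmonic_on U (\<lambda>y. f y - ereal a)"
  unfolding subharmonic_on_def
proof (intro conjI allI impI ballI)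
  fix x assume "x \<in> U"
  then have "f x < \<infinity>" using sub by (simp add: subharmonic_on_def)
  then show "f x - ereal a < \<infinity>" by (cases "f x") auto
next
  show "usc_on U (\<lambda>y. f y - ereal a)"
    unfolding usc_on_def
  proof (intro ballI allI impI)
    fix x c assume x: "x \<in> U" and c: "f x - ereal a < c"
    then have "f x < c + ereal a" by (simp add: ereal_diff_less_iff2)
    then have "\<forall>\<^sub>F y in at x within U. f y < c + ereal a"
      using sub x unfolding subharmonic_on_def usc_on_def by blast
    then show "\<forall>\<^sub>F y in at x within U. f y - ereal a < c"
      by eventually_elim (simp add: ereal_diff_less_iff2)
  qed
next
  fix x r h y
  assume r: "0 < r" and sU: "cball x r \<subseteq> U" and hc: "continuous_on (cball x r) h"
    and hh: "harmonic_on (ball x r) h" and le: "\<forall>y\<in>sphere x r. f y - ereal a \<le> ereal (h y)"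
    and y: "y \<in> cball x r"
  have "\<forall>y\<in>sphere x r. f y \<le> ereal (h y + a)"
    using le by (simp add: ereal_diff_le_iff add.commute)
  moreover have "harmonic_on (ball x r) (\<lambda>y. h y + a)"
    by (intro harmonic_on_add hh harmonic_on_const)
  moreover have "continuous_on (cball x r) (\<lambda>y. h y + a)" using hc by (intro continuous_intros)
  ultimately have "\<forall>y\<in>cball x r. f y \<le> ereal (h y + a)"
    using sub r sU hc unfolding subharmonic_on_def by blast
  then show "f y - ereal a \<le> ereal (h y)" using y by (simp add: ereal_diff_le_iff add.commute)
qed

lemma upper_bound:
  fixes w :: "oct \<times> oct \<Rightarrow> ereal" and \<phi> :: "oct \<times> oct \<Rightarrow> real"
  assumes w: "OPSH (ball 0 1) w" "\<forall>z\<in>sphere 0 1. Limsup (at z within ball 0 1) w \<le> ereal (\<phi> z)"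
    and b: "linear \<beta>" "\<forall>z\<in>sphere 0 1. \<phi> z \<le> \<alpha> + \<beta> z"
    and q: "q \<in> ball 0 1"
  shows "w q \<le> ereal (\<alpha> + \<beta> q)"
proof -
  define l where "l = vline (fst q, 0)"
  have l: "l \<in> lines" unfolding l_def by (rule vline_lines)
  have lx: "l y = (fst q, y)" for y by (simp add: l_def vline_def)
  define V where "V = l -` ball 0 1"
  have Vo: "open V" unfolding V_def using lines_cont[OF l] by (intro open_vimage) auto
  have Vb: "bounded V"
  proof -
    have "V \<subseteq> ball 0 1"
    proof
      fix y assume "y \<in> V"
      then have "norm (fst q, y) < 1" by (simp add: V_def lx)
      moreover have "norm y \<le> norm (fst q, y)" unfolding norm_Pair by (rule real_sqrt_sum_squares_ge2)
      ultimately show "y \<in> ball 0 1" by simp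
    qed
    then show ?thesis by (rule bounded_subset[OF bounded_ball])
  qed
  have sub: "subharmonic_on V (w \<circ> l)" using w(1) l unfolding OPSH_iff V_def by blast
  define H where "H y = (\<alpha> + \<beta> (fst q, 0)) + \<beta> (0, y)" for y
  have Hl: "H y = \<alpha> + \<beta> (l y)" for y
  proof -
    have "l y = (fst q, 0) + (0, y)" by (simp add: lx)
    then have "\<beta> (l y) = \<beta> (fst q, 0) + \<beta> (0, y)" using linear_add[OF b(1)] by metis
    then show ?thesis by (simp add: H_def)
  qed
  have linH: "linear (\<lambda>y::oct. \<beta> (0::oct, y))"
  proof (rule linearI)
    fix x y :: oct and c :: real
    have "(0::oct, x + y) = (0, x) + (0, y)" by simp
    then show "\<beta> (0, x + y) = \<beta> (0, x) + \<beta> (0, y)" using linear_add[OF b(1)] by metis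
    have "(0::oct, c *\<^sub>R x) = c *\<^sub>R (0, x)" by simp
    then show "\<beta> (0, c *\<^sub>R x) = c *\<^sub>R \<beta> (0, x)" using linear_scale[OF b(1)] by metis
  qed
  have Hh: "harmonic_on V H" unfolding H_def by (rule harmonic_on_affine[OF linH])
  have Hcont: "continuous_on UNIV H"
    unfolding H_def using linH by (intro continuous_intros linear_continuous_on) (simp add: linear_conv_bounded_linear)
  have bd: "\<forall>y\<in>frontier V. \<forall>\<epsilon>>0. \<exists>\<delta>>0. \<forall>y'\<in>V. dist y' y < \<delta> \<longrightarrow> (w \<circ> l) y' \<le> ereal (H y' + \<epsilon>)"
  proof (intro ballI allI impI)
    fix y and \<epsilon> :: real assume y: "y \<in> frontier V" and \<epsilon>: "\<epsilon> > 0"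
    have "closed (l -` cball 0 1)" using lines_cont[OF l] by (intro closed_vimage) auto
    moreover have "V \<subseteq> l -` cball 0 1" by (auto simp: V_def)
    ultimately have "closure V \<subseteq> l -` cball 0 1" by (rule closure_minimal[rotated])
    then have "l y \<in> cball 0 1" "l y \<notin> ball 0 1"
      using y Vo by (auto simp: frontier_def interior_open V_def)
    then have z: "l y \<in> sphere 0 1" by auto
    have "Limsup (at (l y) within ball 0 1) w \<le> ereal (\<phi> (l y))" using w(2) z by blast
    also have "\<dots> \<le> ereal (H y)" using b(2) z Hl by simp
    also have "\<dots> < ereal (H y + \<epsilon> / 2)" using \<epsilon> by simp
    finally have "\<forall>\<^sub>F x in at (l y) within ball 0 1. w x < ereal (H y + \<epsilon> / 2)"
      by (rule Limsup_lessD)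
    then obtain d where d: "d > 0" "\<forall>x\<in>ball 0 1. x \<noteq> l y \<and> dist x (l y) < d \<longrightarrow> w x < ereal (H y + \<epsilon> / 2)"
      unfolding eventually_at by blast
    have "isCont l y" by (rule lines_isCont[OF l])
    then obtain d3 where d3: "d3 > 0" "\<forall>y'. dist y' y < d3 \<longrightarrow> dist (l y') (l y) < d"
      using d(1) unfolding continuous_at_eps_delta by blast
    have "isCont H y" using Hcont continuous_on_eq_continuous_at by blast
    moreover have "\<epsilon> / 2 > 0" using \<epsilon> by simp
    ultimately obtain d2 where d2: "d2 > 0" "\<forall>y'. dist y' y < d2 \<longrightarrow> dist (H y') (H y) < \<epsilon> / 2"
      unfolding continuous_at_eps_delta by blast
    show "\<exists>\<delta>>0. \<forall>y'\<in>V. dist y' y < \<delta> \<longrightarrow> (w \<circ> l) y' \<le> ereal (H y' + \<epsilon>)"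
    proof (intro exI[of _ "min d2 d3"] conjI ballI impI)
      fix y' assume y': "y' \<in> V" "dist y' y < min d2 d3"
      have "l y' \<in> ball 0 1" using y' by (simp add: V_def)
      moreover have "l y' \<noteq> l y" using \<open>l y \<notin> ball 0 1\<close> calculation by auto
      moreover have "dist (l y') (l y) < d" using d3(2)[rule_format, of y'] y'(2) by simp
      ultimately have "w (l y') < ereal (H y + \<epsilon> / 2)" using d by blast
      moreover have "H y + \<epsilon> / 2 \<le> H y' + \<epsilon>" 
      proof -
        have "\<bar>H y' - H y\<bar> < \<epsilon> / 2" using d2(2)[rule_format, of y'] y'(2) by (simp add: dist_real_def)
        then show ?thesis by (simp only: abs_less_iff) linarith
      qed
      ultimately show "(w \<circ> l) y' \<le> ereal (H y' + \<epsilon>)" by (simp add: order_less_imp_le order_less_le_trans)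
    qed (use d2 d3 in auto)
  qed
  have "\<forall>y\<in>V. (w \<circ> l) y \<le> ereal (H y)"
    by (rule sub_max_principle[OF sub Vo Vo Vb subset_refl continuous_on_subset[OF Hcont] Hh bd]) simp
  moreover have "l (snd q) = q" by (simp add: lx)
  moreover then have "snd q \<in> V" using q by (simp add: V_def)
  ultimately show ?thesis using Hl[of "snd q"] by force
qed

lemma sphere_ne: "sphere (0::oct \<times> oct) 1 \<noteq> {}"
  by simp

lemma lipschitz_cont:
  fixes G :: "'a::metric_space \<Rightarrow> real"
  assumes L: "L > 0" and G: "\<forall>x y. \<bar>G x - G y\<bar> \<le> L * dist x y"
  shows "continuous_on UNIV G"
  unfolding continuous_on_iff
proof (intro ballI allI impI)
  fix x and e :: real assume e: "e > 0"
  show "\<exists>d>0. \<forall>x'\<in>UNIV. dist x' x < d \<longrightarrow> dist (G x') (G x) < e"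
  proof (intro exI[of _ "e / L"] conjI ballI impI)
    show "e / L > 0" using e L by simp
    fix x' assume "dist x' x < e / L"
    then have "L * dist x' x < e" using L by (simp add: field_simps)
    then show "dist (G x') (G x) < e" using G[rule_format, of x' x] by (simp add: dist_real_def)
  qed
qed

lemma G_props:
  fixes \<phi> :: "oct \<times> oct \<Rightarrow> real" and glow :: "oct \<times> oct \<Rightarrow> oct \<times> oct \<Rightarrow> real"
  assumes L: "L > 0"
    and P2: "\<forall>\<zeta>\<in>sphere 0 1. \<exists>\<alpha> \<beta>. linear \<beta> \<and> (\<forall>q. glow \<zeta> q = \<alpha> + \<beta> q)"
    and P3: "\<forall>\<zeta>\<in>sphere 0 1. \<forall>q\<in>sphere 0 1. glow \<zeta> q \<le> \<phi> q"
    and P4: "\<forall>\<zeta>\<in>sphere 0 1. \<forall>q. \<phi> \<zeta> - L * dist q \<zeta> \<le> glow \<zeta> q"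
    and P5: "\<forall>\<zeta>\<in>sphere 0 1. \<forall>x y. \<bar>glow \<zeta> x - glow \<zeta> y\<bar> \<le> L * dist x y"
    and P6: "\<forall>\<zeta>\<in>sphere 0 1. glow \<zeta> \<zeta> = \<phi> \<zeta>"
    and Gdef: "G = (\<lambda>q. SUP \<zeta>\<in>sphere 0 1. glow \<zeta> q)"
  shows "\<forall>x y. \<bar>G x - G y\<bar> \<le> L * dist x y"
    and "\<forall>z\<in>sphere 0 1. G z = \<phi> z"
    and "\<forall>\<zeta>\<in>sphere 0 1. \<forall>q. \<phi> \<zeta> - L * dist q \<zeta> \<le> G q"
    and "OPSH (ball 0 1) (\<lambda>q. ereal (G q))"
    and "\<forall>z\<in>sphere 0 1. Limsup (at z within ball 0 1) (\<lambda>q. ereal (G q)) \<le> ereal (\<phi> z)"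
proof -
  define S where "S = sphere (0::oct \<times> oct) 1"
  have Sne: "S \<noteq> {}" unfolding S_def by (rule sphere_ne)
  obtain \<zeta>0 where \<zeta>0: "\<zeta>0 \<in> S" using Sne by blast
  have lip: "glow \<zeta> x \<le> glow \<zeta> y + L * dist x y" if "\<zeta> \<in> S" for \<zeta> x y
  proof -
    have "\<bar>glow \<zeta> x - glow \<zeta> y\<bar> \<le> L * dist x y" using P5 that unfolding S_def by blast
    then show ?thesis by (simp add: abs_le_iff)
  qed
  have bdd: "bdd_above ((\<lambda>\<zeta>. glow \<zeta> q) ` S)" for q
  proof (rule bdd_aboveI2)
    fix \<zeta> assume \<zeta>: "\<zeta> \<in> S"
    have "glow \<zeta> q \<le> glow \<zeta> \<zeta>0 + L * dist q \<zeta>0" by (rule lip[OF \<zeta>])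
    also have "\<dots> \<le> \<phi> \<zeta>0 + L * dist q \<zeta>0" using P3 \<zeta> \<zeta>0 unfolding S_def by auto
    finally show "glow \<zeta> q \<le> \<phi> \<zeta>0 + L * dist q \<zeta>0" .
  qed
  have G1: "glow \<zeta> q \<le> G q" if "\<zeta> \<in> S" for \<zeta> q
    unfolding Gdef S_def[symmetric] using bdd that by (rule cSUP_upper2) simp
  have Gle: "G q \<le> c" if "\<And>\<zeta>. \<zeta> \<in> S \<Longrightarrow> glow \<zeta> q \<le> c" for q c
    unfolding Gdef S_def[symmetric] using Sne that by (rule cSUP_least)
  show GL: "\<forall>x y. \<bar>G x - G y\<bar> \<le> L * dist x y"
  proof (intro allI)
    fix x y
    have "G x \<le> G y + L * dist x y"
    proof (rule Gle)
      fix \<zeta> assume \<zeta>: "\<zeta> \<in> S"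
      have "glow \<zeta> x \<le> glow \<zeta> y + L * dist x y" by (rule lip[OF \<zeta>])
      also have "\<dots> \<le> G y + L * dist x y" using G1[OF \<zeta>] by simp
      finally show "glow \<zeta> x \<le> G y + L * dist x y" .
    qed
    moreover have "G y \<le> G x + L * dist x y"
    proof (rule Gle)
      fix \<zeta> assume \<zeta>: "\<zeta> \<in> S"
      have "glow \<zeta> y \<le> glow \<zeta> x + L * dist x y" using lip[OF \<zeta>, of y x] by (simp add: dist_commute)
      also have "\<dots> \<le> G x + L * dist x y" using G1[OF \<zeta>] by simp
      finally show "glow \<zeta> y \<le> G x + L * dist x y" .
    qed
    ultimately show "\<bar>G x - G y\<bar> \<le> L * dist x y" by linarith
  qed
  show G3: "\<forall>z\<in>sphere 0 1. G z = \<phi> z"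
  proof
    fix z :: "oct \<times> oct" assume z: "z \<in> sphere 0 1"
    have "G z \<le> \<phi> z" using P3 z by (intro Gle) (auto simp: S_def)
    moreover have "\<phi> z \<le> G z" using G1[of z z] P6 z by (auto simp: S_def)
    ultimately show "G z = \<phi> z" by simp
  qed
  show "\<forall>\<zeta>\<in>sphere 0 1. \<forall>q. \<phi> \<zeta> - L * dist q \<zeta> \<le> G q"
  proof (intro ballI allI)
    fix \<zeta> q :: "oct \<times> oct" assume \<zeta>: "\<zeta> \<in> sphere 0 1"
    have "\<phi> \<zeta> - L * dist q \<zeta> \<le> glow \<zeta> q" using P4 \<zeta> by blast
    also have "\<dots> \<le> G q" using G1 \<zeta> unfolding S_def by blast
    finally show "\<phi> \<zeta> - L * dist q \<zeta> \<le> G q" .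
  qed
  have Gc: "continuous_on UNIV G" by (rule lipschitz_cont[OF L GL])
  show "OPSH (ball 0 1) (\<lambda>q. ereal (G q))"
    unfolding OPSH_iff
  proof (intro conjI ballI)
    show "usc_on (ball 0 1) (\<lambda>q. ereal (G q))"
      by (rule usc_continuous[OF continuous_on_subset[OF Gc]]) simp
    fix l assume l: "l \<in> lines"
    define V where "V = l -` ball 0 1"
    have Glc: "continuous_on UNIV (G \<circ> l)" by (rule continuous_on_compose[OF lines_cont[OF l] continuous_on_subset[OF Gc]]) simp
    show "subharmonic_on (l -` ball 0 1) ((\<lambda>q. ereal (G q)) \<circ> l)"
      unfolding subharmonic_on_def V_def[symmetric]
    proof (intro conjI allI impI ballI)
      show "usc_on V ((\<lambda>q. ereal (G q)) \<circ> l)"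
        using usc_continuous[OF continuous_on_subset[OF Glc, of V]] by (simp add: o_def)
      fix x r h y
      assume r: "0 < r" and sV: "cball x r \<subseteq> V" and hc: "continuous_on (cball x r) h"
        and hh: "harmonic_on (ball x r) h" and le: "\<forall>y\<in>sphere x r. ((\<lambda>q. ereal (G q)) \<circ> l) y \<le> ereal (h y)"
        and y: "y \<in> cball x r"
      have "G (l y) \<le> h y"
      proof (rule Gle)
        fix \<zeta> assume \<zeta>: "\<zeta> \<in> S"
        obtain \<alpha> \<beta> where ab: "linear \<beta>" "\<forall>q. glow \<zeta> q = \<alpha> + \<beta> q" using P2 \<zeta> unfolding S_def by blast
        have "OPSH (ball 0 1) (\<lambda>q. ereal (\<alpha> + \<beta> q))" by (rule OPSH_affine[OF ab(1)])
        then have sub: "subharmonic_on V ((\<lambda>q. ereal (\<alpha> + \<beta> q)) \<circ> l)" using l unfolding OPSH_iff V_def by blast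
        have "\<forall>y\<in>sphere x r. ((\<lambda>q. ereal (\<alpha> + \<beta> q)) \<circ> l) y \<le> ereal (h y)"
        proof
          fix y assume y: "y \<in> sphere x r"
          have "\<alpha> + \<beta> (l y) = glow \<zeta> (l y)" using ab(2)[rule_format, of "l y"] by simp
          also have "\<dots> \<le> G (l y)" by (rule G1[OF \<zeta>])
          finally have "\<alpha> + \<beta> (l y) \<le> G (l y)" .
          moreover have "G (l y) \<le> h y" using le y by auto
          ultimately show "((\<lambda>q. ereal (\<alpha> + \<beta> q)) \<circ> l) y \<le> ereal (h y)" by simp
        qed
        then have "\<forall>y\<in>cball x r. ((\<lambda>q. ereal (\<alpha> + \<beta> q)) \<circ> l) y \<le> ereal (h y)"
          using sub r sV hc hh unfolding subharmonic_on_def by blast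
        then show "glow \<zeta> (l y) \<le> h y" using y ab(2)[rule_format, of "l y"] by simp
      qed
      then show "((\<lambda>q. ereal (G q)) \<circ> l) y \<le> ereal (h y)" by simp
    qed simp
  qed simp
  show "\<forall>z\<in>sphere 0 1. Limsup (at z within ball 0 1) (\<lambda>q. ereal (G q)) \<le> ereal (\<phi> z)"
  proof
    fix z :: "oct \<times> oct" assume z: "z \<in> sphere 0 1"
    have nt: "\<not> trivial_limit (at z within ball 0 1)"
      using z by (simp add: trivial_limit_within islimpt_ball)
    have "isCont G z" using Gc continuous_on_eq_continuous_at by blast
    then have "(G \<longlongrightarrow> G z) (at z within UNIV)" by (simp add: isCont_def)
    then have "(G \<longlongrightarrow> G z) (at z within ball 0 1)"
      by (rule tendsto_within_subset) simp
    then have "((\<lambda>q. ereal (G q)) \<longlongrightarrow> ereal (G z)) (at z within ball 0 1)"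
      by (rule tendsto_ereal)
    then have "Limsup (at z within ball 0 1) (\<lambda>q. ereal (G q)) = ereal (G z)"
      by (rule lim_imp_Limsup[OF nt])
    then show "Limsup (at z within ball 0 1) (\<lambda>q. ereal (G q)) \<le> ereal (\<phi> z)" using G3 z by simp
  qed
qed

lemma glue:
  fixes \<phi> G :: "oct \<times> oct \<Rightarrow> real" and w T W :: "oct \<times> oct \<Rightarrow> ereal" and h :: "oct \<times> oct"
  assumes L: "L > 0"
    and GL: "\<forall>x y. \<bar>G x - G y\<bar> \<le> L * dist x y"
    and G3: "\<forall>z\<in>sphere 0 1. G z = \<phi> z"
    and G4: "\<forall>\<zeta>\<in>sphere 0 1. \<forall>q. \<phi> \<zeta> - L * dist q \<zeta> \<le> G q"
    and GO: "OPSH (ball 0 1) (\<lambda>q. ereal (G q))"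
    and wO: "OPSH (ball 0 1) w"
    and UB: "\<forall>q\<in>ball 0 1. \<forall>z\<in>sphere 0 1. w q \<le> ereal (\<phi> z + L * dist q z)"
    and h: "h \<noteq> 0"
    and Tdef: "T = (\<lambda>\<xi>. if \<xi> + h \<in> ball 0 1 then w (\<xi> + h) - ereal ((2 * L + 1) * norm h) else -\<infinity>)"
    and Wdef: "W = (\<lambda>\<xi>. max (ereal (G \<xi>)) (T \<xi>))"
  shows "OPSH (ball 0 1) W \<and> (\<forall>z\<in>sphere 0 1. Limsup (at z within ball 0 1) W \<le> ereal (\<phi> z))"
proof -
  define B where "B = ball (0::oct \<times> oct) 1"
  define A where "A = 2 * L + 1"
  have Tdef': "T \<xi> = (if \<xi> + h \<in> B then w (\<xi> + h) - ereal (A * norm h) else -\<infinity>)" for \<xi>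
    by (simp add: Tdef A_def B_def)
  have Gc: "continuous_on UNIV G" by (rule lipschitz_cont[OF L GL])
  have wfin: "w q < \<infinity>" if "q \<in> B" for q using wO that unfolding OPSH_iff B_def by blast
  have Tfin: "T \<xi> < \<infinity>" for \<xi>
  proof (cases "\<xi> + h \<in> B")
    case True then show ?thesis using wfin[OF True] by (cases "w (\<xi> + h)") (auto simp: Tdef')
  qed (simp add: Tdef')
  have Wfin: "W \<xi> < \<infinity>" for \<xi> using Tfin[of \<xi>] unfolding Wdef by (simp only: max_less_iff_conj) simp
  have hpos: "norm h > 0" using h by simp
  have star: "\<exists>\<delta>>0. \<forall>\<xi>'. dist \<xi>' \<xi> < \<delta> \<longrightarrow> T \<xi>' < ereal (G \<xi>')" if \<xi>: "\<xi> + h \<notin> B" for \<xi>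
  proof (intro exI[of _ "min (1/2) (norm h / 2)"] conjI allI impI)
    show "min (1/2) (norm h / 2) > 0" using hpos by simp
    fix \<xi>' assume d: "dist \<xi>' \<xi> < min (1/2) (norm h / 2)"
    show "T \<xi>' < ereal (G \<xi>')"
    proof (cases "\<xi>' + h \<in> B")
      case False then show ?thesis by (simp add: Tdef')
    next
      case True
      define q where "q = \<xi>' + h"
      have nq1: "norm q < 1" using True by (simp add: q_def B_def)
      have "norm (\<xi> + h) \<ge> 1" using \<xi> by (simp add: B_def)
      have dq: "dist q (\<xi> + h) = dist \<xi>' \<xi>" by (simp add: q_def dist_norm)
      have "norm (\<xi> + h) \<le> norm q + dist q (\<xi> + h)" using norm_triangle_sub[of "\<xi> + h" q] by (simp add: dist_norm norm_minus_commute)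
      then have nqlow: "norm q > 1 - min (1/2) (norm h / 2)" using dq d \<open>norm (\<xi> + h) \<ge> 1\<close> by linarith
      then have nqpos: "norm q > 0" by linarith
      define z where "z = (1 / norm q) *\<^sub>R q"
      have zS: "z \<in> sphere 0 1" using nqpos by (simp add: z_def)
      have "q - z = (1 - 1 / norm q) *\<^sub>R q" by (simp add: z_def algebra_simps)
      then have "dist q z = \<bar>1 - 1 / norm q\<bar> * norm q" by (simp add: dist_norm)
      also have "\<dots> = 1 - norm q" using nqpos nq1 by (simp add: abs_if field_simps)
      finally have dqz: "dist q z < min (1/2) (norm h / 2)" using nqlow by linarith
      have "w q \<le> ereal (\<phi> z + L * dist q z)" using UB True zS by (simp add: q_def B_def)
      then have Tle: "T \<xi>' \<le> ereal (\<phi> z + L * dist q z - A * norm h)"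
        using True by (simp add: Tdef' q_def[symmetric] ereal_diff_le_iff)
      have "dist \<xi>' z \<le> dist \<xi>' q + dist q z" by (rule dist_triangle)
      moreover have "dist \<xi>' q = norm h" by (simp add: q_def dist_norm)
      ultimately have "\<phi> z - L * (norm h + dist q z) \<le> G \<xi>'"
        using G4 zS L by (smt (verit) mult_left_mono)
      moreover have "2 * L * dist q z \<le> L * norm h"
      proof -
        have "2 * dist q z \<le> norm h" using dqz by linarith
        then show ?thesis using L by (metis mult.assoc mult.commute mult_left_mono less_imp_le)
      qed
      moreover have "A * norm h = 2 * (L * norm h) + norm h" by (simp add: A_def algebra_simps)
      moreover have "L * (norm h + dist q z) = L * norm h + L * dist q z" by (simp add: algebra_simps)
      moreover have "2 * L * dist q z = 2 * (L * dist q z)" by simp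
      ultimately have "\<phi> z + L * dist q z - A * norm h < G \<xi>'"
        using hpos by linarith
      then have "ereal (\<phi> z + L * dist q z - A * norm h) < ereal (G \<xi>')" by simp
      with Tle show ?thesis by (rule le_less_trans)
    qed
  qed
  have Tbound: "T \<xi> \<le> ereal (\<phi> z + L * dist \<xi> z)" if z: "z \<in> sphere 0 1" for \<xi> z
  proof (cases "\<xi> + h \<in> B")
    case True
    have w1: "w (\<xi> + h) \<le> ereal (\<phi> z + L * dist (\<xi> + h) z)" using UB True z by (simp add: B_def)
    have d1: "dist (\<xi> + h) z \<le> dist \<xi> z + norm h"
      using norm_triangle_ineq[of "\<xi> - z" h] by (simp add: dist_norm algebra_simps)
    have d2: "L * dist (\<xi> + h) z \<le> L * (dist \<xi> z + norm h)" using L d1 by (intro mult_left_mono) auto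
    have d3: "L * norm h \<le> A * norm h" using L unfolding A_def by (intro mult_right_mono) auto
    have "\<phi> z + L * dist (\<xi> + h) z \<le> A * norm h + (\<phi> z + L * dist \<xi> z)"
      using d2 d3 by (simp add: algebra_simps)
    then have "ereal (\<phi> z + L * dist (\<xi> + h) z) \<le> ereal (A * norm h + (\<phi> z + L * dist \<xi> z))" by simp
    with w1 have "w (\<xi> + h) \<le> ereal (A * norm h + (\<phi> z + L * dist \<xi> z))"
      by (rule order_trans)
    then show ?thesis using True by (simp add: Tdef' ereal_diff_le_iff)
  qed (simp add: Tdef')
  have uscW: "\<exists>\<delta>>0. \<forall>\<xi>'. dist \<xi>' \<xi> < \<delta> \<longrightarrow> W \<xi>' < c" if lt: "W \<xi> < c" for \<xi> c
  proof (cases c)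
    case PInf then show ?thesis using Wfin by (intro exI[of _ 1]) auto
  next
    case MInf then show ?thesis using lt by simp
  next
    case (real c')
    have Gl: "G \<xi> < c'" and Tl: "T \<xi> < ereal c'" using lt real by (auto simp: Wdef)
    have "isCont G \<xi>" using Gc continuous_on_eq_continuous_at by blast
    moreover have "c' - G \<xi> > 0" using Gl by simp
    ultimately obtain d1 where d1: "d1 > 0" "\<forall>\<xi>'. dist \<xi>' \<xi> < d1 \<longrightarrow> dist (G \<xi>') (G \<xi>) < c' - G \<xi>"
      unfolding continuous_at_eps_delta by blast
    have G': "G \<xi>' < c'" if "dist \<xi>' \<xi> < d1" for \<xi>'
      using d1(2)[rule_format, OF that] by (simp add: dist_real_def abs_less_iff)
    obtain d2 where d2: "d2 > 0" "\<forall>\<xi>'. dist \<xi>' \<xi> < d2 \<longrightarrow> T \<xi>' < ereal c'"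
    proof (cases "\<xi> + h \<in> B")
      case True
      then have wl: "w (\<xi> + h) < ereal (A * norm h + c')" using Tl by (simp add: Tdef' ereal_diff_less_iff)
      have uB: "usc_on B w" using wO unfolding OPSH_iff B_def by blast
      have oB: "open B" by (simp add: B_def)
      obtain d where d: "d > 0" "\<forall>q. dist q (\<xi> + h) < d \<longrightarrow> q \<in> B \<and> w q < ereal (A * norm h + c')"
        using usc_on_openD[OF uB oB True wl] by blast
      show ?thesis
      proof (rule that[of d])
        show "d > 0" by (rule d(1))
        show "\<forall>\<xi>'. dist \<xi>' \<xi> < d \<longrightarrow> T \<xi>' < ereal c'"
        proof (intro allI impI)
          fix \<xi>' assume "dist \<xi>' \<xi> < d"
          then have "dist (\<xi>' + h) (\<xi> + h) < d" by (simp add: dist_norm)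
          then have "\<xi>' + h \<in> B" "w (\<xi>' + h) < ereal (A * norm h + c')" using d(2)[rule_format, of "\<xi>' + h"] by auto
          then show "T \<xi>' < ereal c'" by (simp add: Tdef' ereal_diff_less_iff)
        qed
      qed
    next
      case False
      obtain d where d: "d > 0" "\<forall>\<xi>'. dist \<xi>' \<xi> < d \<longrightarrow> T \<xi>' < ereal (G \<xi>')" using star[OF False] by blast
      show ?thesis
      proof (rule that[of "min d d1"])
        show "min d d1 > 0" using d d1 by simp
        show "\<forall>\<xi>'. dist \<xi>' \<xi> < min d d1 \<longrightarrow> T \<xi>' < ereal c'"
        proof (intro allI impI)
          fix \<xi>' assume "dist \<xi>' \<xi> < min d d1"
          then have "T \<xi>' < ereal (G \<xi>')" "G \<xi>' < c'" using d(2)[rule_format, of \<xi>'] G'[of \<xi>'] by auto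
          then show "T \<xi>' < ereal c'" using less_trans[of "T \<xi>'" "ereal (G \<xi>')" "ereal c'"] by simp
        qed
      qed
    qed
    show ?thesis
    proof (intro exI[of _ "min d1 d2"] conjI allI impI)
      show "min d1 d2 > 0" using d1 d2 by simp
      fix \<xi>' assume "dist \<xi>' \<xi> < min d1 d2"
      then have "G \<xi>' < c'" "T \<xi>' < ereal c'" using G'[of \<xi>'] d2(2)[rule_format, of \<xi>'] by auto
      then show "W \<xi>' < c" using real by (simp add: Wdef)
    qed
  qed
  have uscWB: "usc_on B W" by (rule usc_on_intro) (use uscW in blast)
  have Limsup_W: "\<forall>z\<in>sphere 0 1. Limsup (at z within ball 0 1) W \<le> ereal (\<phi> z)"
  proof
    fix z :: "oct \<times> oct" assume z: "z \<in> sphere 0 1"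
    define R where "R \<xi> = max (G \<xi>) (\<phi> z + L * dist \<xi> z)" for \<xi>
    have WR: "W \<xi> \<le> ereal (R \<xi>)" for \<xi>
    proof -
      have "W \<xi> \<le> max (ereal (G \<xi>)) (ereal (\<phi> z + L * dist \<xi> z))"
        unfolding Wdef by (rule max.mono[OF order_refl Tbound[OF z]])
      moreover have "max (ereal (G \<xi>)) (ereal (\<phi> z + L * dist \<xi> z)) = ereal (R \<xi>)"
        by (cases "G \<xi> \<le> \<phi> z + L * dist \<xi> z") (auto simp: R_def max_def)
      ultimately show ?thesis by simp
    qed
    have Rc: "continuous_on UNIV R" unfolding R_def using Gc by (intro continuous_intros)
    have nt: "\<not> trivial_limit (at z within ball 0 1)"
      using z by (simp add: trivial_limit_within islimpt_ball)
    have "isCont R z" using Rc continuous_on_eq_continuous_at by blast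
    then have "(R \<longlongrightarrow> R z) (at z within UNIV)" by (simp add: isCont_def)
    then have "(R \<longlongrightarrow> R z) (at z within ball 0 1)" by (rule tendsto_within_subset) simp
    then have "((\<lambda>q. ereal (R q)) \<longlongrightarrow> ereal (R z)) (at z within ball 0 1)" by (rule tendsto_ereal)
    then have "Limsup (at z within ball 0 1) (\<lambda>q. ereal (R q)) = ereal (R z)" by (rule lim_imp_Limsup[OF nt])
    moreover have "Limsup (at z within ball 0 1) W \<le> Limsup (at z within ball 0 1) (\<lambda>q. ereal (R q))"
      by (rule Limsup_mono) (simp add: WR)
    moreover have "R z = \<phi> z" using G3 z by (simp add: R_def)
    ultimately show "Limsup (at z within ball 0 1) W \<le> ereal (\<phi> z)" by simp
  qed
  have OPSH_W: "OPSH B W"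
    unfolding OPSH_iff
  proof (intro conjI ballI)
    show "usc_on B W" by (rule uscWB)
    fix l assume l: "l \<in> lines"
    define V where "V = l -` B"
    show "subharmonic_on (l -` B) (W \<circ> l)"
      unfolding subharmonic_on_def V_def[symmetric]
    proof (intro conjI allI impI ballI)
      show "usc_on V (W \<circ> l)"
      proof (rule usc_on_intro, intro ballI allI impI)
        fix y c assume "y \<in> V" "(W \<circ> l) y < c"
        then have "W (l y) < c" by simp
        then obtain \<delta>0 where \<delta>0: "\<delta>0 > 0" "\<forall>\<xi>'. dist \<xi>' (l y) < \<delta>0 \<longrightarrow> W \<xi>' < c" using uscW by blast
        have "isCont l y" by (rule lines_isCont[OF l])
        then obtain \<delta>1 where \<delta>1: "\<delta>1 > 0" "\<forall>y'. dist y' y < \<delta>1 \<longrightarrow> dist (l y') (l y) < \<delta>0"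
          using \<delta>0(1) unfolding continuous_at_eps_delta by blast
        show "\<exists>\<delta>>0. \<forall>y'\<in>V. dist y' y < \<delta> \<longrightarrow> (W \<circ> l) y' < c"
        proof (intro exI[of _ \<delta>1] conjI ballI impI)
          fix y' assume "dist y' y < \<delta>1"
          then have "dist (l y') (l y) < \<delta>0" using \<delta>1(2) by blast
          then show "(W \<circ> l) y' < c" using \<delta>0(2)[rule_format, of "l y'"] by simp
        qed (rule \<delta>1(1))
      qed
      fix x0 r Hh y
      assume r: "0 < r" and sV: "cball x0 r \<subseteq> V" and Hc: "continuous_on (cball x0 r) Hh"
        and Hh: "harmonic_on (ball x0 r) Hh" and le: "\<forall>y\<in>sphere x0 r. (W \<circ> l) y \<le> ereal (Hh y)"
        and y: "y \<in> cball x0 r"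
      have subG: "subharmonic_on V ((\<lambda>q. ereal (G q)) \<circ> l)" using GO l unfolding OPSH_iff V_def B_def by blast
      have Gle: "\<forall>y\<in>cball x0 r. G (l y) \<le> Hh y"
      proof -
        have "\<forall>y\<in>sphere x0 r. ((\<lambda>q. ereal (G q)) \<circ> l) y \<le> ereal (Hh y)"
        proof
          fix y assume "y \<in> sphere x0 r"
          then have "W (l y) \<le> ereal (Hh y)" using le by auto
          moreover have "ereal (G (l y)) \<le> W (l y)" by (simp add: Wdef)
          ultimately have "ereal (G (l y)) \<le> ereal (Hh y)" by (rule order_trans[rotated])
          then show "((\<lambda>q. ereal (G q)) \<circ> l) y \<le> ereal (Hh y)" by simp
        qed
        then have "\<forall>y\<in>cball x0 r. ((\<lambda>q. ereal (G q)) \<circ> l) y \<le> ereal (Hh y)"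
          using subG r sV Hc Hh unfolding subharmonic_on_def by blast
        then show ?thesis by simp
      qed
      have Tle: "T (l y) \<le> ereal (Hh y)"
      proof (cases "y \<in> sphere x0 r")
        case True
        then have "W (l y) \<le> ereal (Hh y)" using le by auto
        then show ?thesis by (simp add: Wdef)
      next
        case False
        then have yb: "y \<in> ball x0 r" using y by auto
        show ?thesis
        proof (cases "l y + h \<in> B")
          case False then show ?thesis by (simp add: Tdef')
        next
          case True
          define l' where "l' = (\<lambda>y. l y + h)"
          have l': "l' \<in> lines" unfolding l'_def by (rule lines_translate[OF l])
          define V' where "V' = l' -` B"
          define f where "f y = w (l' y) - ereal (A * norm h)" for y
          have V'o: "open V'" unfolding V'_def B_def using lines_cont[OF l'] by (intro open_vimage) auto
          have subf: "subharmonic_on V' f"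
          proof -
            have "subharmonic_on V' (w \<circ> l')" using wO l' unfolding OPSH_iff V'_def B_def by blast
            then have "subharmonic_on V' (\<lambda>y. (w \<circ> l') y - ereal (A * norm h))"
              by (rule subharmonic_minus_const)
            moreover have "f = (\<lambda>y. (w \<circ> l') y - ereal (A * norm h))" by (simp add: fun_eq_iff f_def)
            ultimately show ?thesis by simp
          qed
          have fT: "f y' = T (l y')" if "y' \<in> V'" for y'
            using that by (simp add: f_def Tdef' V'_def l'_def)
          define Dd where "Dd = ball x0 r \<inter> V'"
          have Ddo: "open Dd" unfolding Dd_def using V'o by auto
          have Ddb: "bounded Dd" unfolding Dd_def by auto
          have DdV: "Dd \<subseteq> V'" unfolding Dd_def by auto
          have clDd: "closure Dd \<subseteq> cball x0 r"
            by (rule closure_minimal) (auto simp: Dd_def)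
          have HcD: "continuous_on (closure Dd) Hh" using Hc clDd by (rule continuous_on_subset)
          have HhD: "harmonic_on Dd Hh" using Hh by (rule harmonic_on_subset) (auto simp: Dd_def)
          have bd: "\<forall>y1\<in>frontier Dd. \<forall>\<epsilon>>0. \<exists>\<delta>>0. \<forall>y'\<in>Dd. dist y' y1 < \<delta> \<longrightarrow> f y' \<le> ereal (Hh y' + \<epsilon>)"
          proof (intro ballI allI impI)
            fix y1 and \<epsilon> :: real assume y1: "y1 \<in> frontier Dd" and \<epsilon>: "\<epsilon> > 0"
            have y1c: "y1 \<in> cball x0 r" using y1 clDd by (auto simp: frontier_def)
            have y1nD: "y1 \<notin> Dd" using y1 Ddo by (auto simp: frontier_def interior_open)
            show "\<exists>\<delta>>0. \<forall>y'\<in>Dd. dist y' y1 < \<delta> \<longrightarrow> f y' \<le> ereal (Hh y' + \<epsilon>)"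
            proof (cases "y1 \<in> V'")
              case True
              then have y1s: "y1 \<in> sphere x0 r" using y1c y1nD by (auto simp: Dd_def)
              have "f y1 = T (l y1)" by (rule fT[OF True])
              also have "\<dots> \<le> W (l y1)" by (simp add: Wdef)
              also have "\<dots> \<le> ereal (Hh y1)" using le y1s by auto
              also have "\<dots> < ereal (Hh y1 + \<epsilon> / 2)" using \<epsilon> by simp
              finally have "f y1 < ereal (Hh y1 + \<epsilon> / 2)" .
              moreover have "usc_on V' f" using subf by (simp add: subharmonic_on_def)
              ultimately obtain d where d: "d > 0" "\<forall>y'. dist y' y1 < d \<longrightarrow> y' \<in> V' \<and> f y' < ereal (Hh y1 + \<epsilon> / 2)"
                using usc_on_openD[OF _ V'o True] by blast
              have "\<epsilon> / 2 > 0" using \<epsilon> by simp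
              then obtain d2 where d2: "d2 > 0" "\<forall>y'\<in>cball x0 r. dist y' y1 < d2 \<longrightarrow> dist (Hh y') (Hh y1) < \<epsilon> / 2"
                using Hc y1c unfolding continuous_on_iff by blast
              show ?thesis
              proof (intro exI[of _ "min d d2"] conjI ballI impI)
                show "min d d2 > 0" using d d2 by simp
                fix y' assume y': "y' \<in> Dd" "dist y' y1 < min d d2"
                have "f y' < ereal (Hh y1 + \<epsilon> / 2)" using d(2)[rule_format, of y'] y' by simp
                moreover have "y' \<in> cball x0 r" using y' by (auto simp: Dd_def)
                then have "\<bar>Hh y' - Hh y1\<bar> < \<epsilon> / 2" using d2(2) y' by (simp add: dist_real_def)
                then have "Hh y1 + \<epsilon> / 2 \<le> Hh y' + \<epsilon>" by (simp only: abs_less_iff) linarith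
                then have "ereal (Hh y1 + \<epsilon> / 2) \<le> ereal (Hh y' + \<epsilon>)" by simp
                ultimately show "f y' \<le> ereal (Hh y' + \<epsilon>)"
                  using less_imp_le order_trans by blast
              qed
            next
              case False
              then have "l y1 + h \<notin> B" by (simp add: V'_def l'_def)
              then obtain \<delta>0 where \<delta>0: "\<delta>0 > 0" "\<forall>\<xi>'. dist \<xi>' (l y1) < \<delta>0 \<longrightarrow> T \<xi>' < ereal (G \<xi>')"
                using star by blast
              have "isCont l y1" by (rule lines_isCont[OF l])
              then obtain \<delta>1 where \<delta>1: "\<delta>1 > 0" "\<forall>y'. dist y' y1 < \<delta>1 \<longrightarrow> dist (l y') (l y1) < \<delta>0"
                using \<delta>0(1) unfolding continuous_at_eps_delta by blast
              show ?thesis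
              proof (intro exI[of _ \<delta>1] conjI ballI impI)
                show "\<delta>1 > 0" by (rule \<delta>1(1))
                fix y' assume y': "y' \<in> Dd" "dist y' y1 < \<delta>1"
                have "f y' = T (l y')" using y' DdV fT by blast
                also have "\<dots> < ereal (G (l y'))" using \<delta>0(2) \<delta>1(2) y'(2) by blast
                also have "\<dots> \<le> ereal (Hh y')" using Gle y' by (auto simp: Dd_def)
                also have "\<dots> \<le> ereal (Hh y' + \<epsilon>)" using \<epsilon> by simp
                finally show "f y' \<le> ereal (Hh y' + \<epsilon>)" by simp
              qed
            qed
          qed
          have "\<forall>y\<in>Dd. f y \<le> ereal (Hh y)"
            by (rule sub_max_principle[OF subf V'o Ddo Ddb DdV HcD HhD bd])
          moreover have "y \<in> Dd" using yb True by (simp add: Dd_def V'_def l'_def)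
          ultimately have "f y \<le> ereal (Hh y)" by blast
          moreover have "f y = T (l y)" using fT \<open>y \<in> Dd\<close> DdV by blast
          ultimately show ?thesis by simp
        qed
      qed
      show "(W \<circ> l) y \<le> ereal (Hh y)" using Tle Gle y by (simp add: Wdef)
    next
      fix y assume "y \<in> V" then show "(W \<circ> l) y < \<infinity>" using Wfin by simp
    qed
  next
    fix x assume "x \<in> B" then show "W x < \<infinity>" using Wfin by simp
  qed
  show ?thesis using OPSH_W Limsup_W by (simp add: B_def)
qed

lemma ereal_minus_le_to_plus: "(a::ereal) - ereal c \<le> b \<Longrightarrow> a \<le> b + ereal c"
  by (cases a; cases b) auto

theorem proposition6p9:
  fixes \<phi> :: "oct \<times> oct \<Rightarrow> real" and u :: "oct \<times> oct \<Rightarrow> ereal"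
  assumes "C2_on_sphere \<phi>"
    and "\<And>x. u x = (if x \<in> ball 0 1 then perron_bremermann (ball 0 1) \<phi> x else ereal (\<phi> x))"
  shows "\<exists>v L. (\<forall>x\<in>cball 0 1. u x = ereal (v x)) \<and> L-lipschitz_on (cball 0 1) v"
proof -
  obtain L hup glow where L: "L > 0"
    and P1: "\<forall>\<zeta>\<in>sphere 0 1. \<exists>\<alpha> \<beta>. linear \<beta> \<and> (\<forall>q. hup \<zeta> q = \<alpha> + \<beta> q)"
    and P2: "\<forall>\<zeta>\<in>sphere 0 1. \<exists>\<alpha> \<beta>. linear \<beta> \<and> (\<forall>q. glow \<zeta> q = \<alpha> + \<beta> q)"
    and P3: "\<forall>\<zeta>\<in>sphere 0 1. \<forall>q\<in>sphere 0 1. glow \<zeta> q \<le> \<phi> q \<and> \<phi> q \<le> hup \<zeta> q"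
    and P4: "\<forall>\<zeta>\<in>sphere 0 1. \<forall>q. hup \<zeta> q \<le> \<phi> \<zeta> + L * dist q \<zeta> \<and> \<phi> \<zeta> - L * dist q \<zeta> \<le> glow \<zeta> q"
    and P5: "\<forall>\<zeta>\<in>sphere 0 1. \<forall>x y. \<bar>glow \<zeta> x - glow \<zeta> y\<bar> \<le> L * dist x y"
    and P6: "\<forall>\<zeta>\<in>sphere 0 1. glow \<zeta> \<zeta> = \<phi> \<zeta>"
    using C2_sphere_barriers[OF assms(1)] by blast
  define G where "G = (\<lambda>q. SUP \<zeta>\<in>sphere 0 1. glow \<zeta> q)"
  have P3': "\<forall>\<zeta>\<in>sphere 0 1. \<forall>q\<in>sphere 0 1. glow \<zeta> q \<le> \<phi> q" using P3 by blast
  have P4': "\<forall>\<zeta>\<in>sphere 0 1. \<forall>q. \<phi> \<zeta> - L * dist q \<zeta> \<le> glow \<zeta> q" using P4 by blast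
  note GP = G_props[OF L P2 P3' P4' P5 P6 G_def]
  have GL: "\<forall>x y. \<bar>G x - G y\<bar> \<le> L * dist x y" by (rule GP(1))
  have G3: "\<forall>z\<in>sphere 0 1. G z = \<phi> z" by (rule GP(2))
  have G4: "\<forall>\<zeta>\<in>sphere 0 1. \<forall>q. \<phi> \<zeta> - L * dist q \<zeta> \<le> G q" by (rule GP(3))
  have GO: "OPSH (ball 0 1) (\<lambda>q. ereal (G q))" by (rule GP(4))
  have GLim: "\<forall>z\<in>sphere 0 1. Limsup (at z within ball 0 1) (\<lambda>q. ereal (G q)) \<le> ereal (\<phi> z)" by (rule GP(5))
  define F where "F = {w. OPSH (ball (0::oct \<times> oct) 1) w \<and>
      (\<forall>z\<in>sphere 0 1. Limsup (at z within ball 0 1) w \<le> ereal (\<phi> z))}"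
  define PB where "PB x = Sup {w x |w. w \<in> F}" for x
  have fr: "frontier (ball (0::oct \<times> oct) 1) = sphere 0 1" by simp
  have PBeq: "perron_bremermann (ball 0 1) \<phi> x = PB x" for x
    unfolding perron_bremermann_def PB_def F_def fr by simp
  have UBw: "w q \<le> ereal (\<phi> z + L * dist q z)"
    if w: "w \<in> F" and q: "q \<in> ball 0 1" and z: "z \<in> sphere 0 1" for w q z
  proof -
    obtain \<alpha> \<beta> where ab: "linear \<beta>" "\<forall>q. hup z q = \<alpha> + \<beta> q" using P1 z by blast
    have "\<forall>z'\<in>sphere 0 1. \<phi> z' \<le> \<alpha> + \<beta> z'"
    proof
      fix z' :: "oct \<times> oct" assume "z' \<in> sphere 0 1"
      then have "\<phi> z' \<le> hup z z'" using P3 z by blast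
      then show "\<phi> z' \<le> \<alpha> + \<beta> z'" using ab(2)[rule_format, of z'] by simp
    qed
    then have "w q \<le> ereal (\<alpha> + \<beta> q)"
      using upper_bound[of w \<phi> \<beta> \<alpha> q] w q ab(1) by (simp add: F_def)
    also have "\<alpha> + \<beta> q = hup z q" using ab(2)[rule_format, of q] by simp
    also have "hup z q \<le> \<phi> z + L * dist q z" using P4 z by blast
    finally show ?thesis by simp
  qed
  have GF: "(\<lambda>q. ereal (G q)) \<in> F" using GO GLim by (simp add: F_def)
  have lower: "ereal (G x) \<le> PB x" for x
    unfolding PB_def using GF by (intro Sup_upper CollectI exI[of _ "\<lambda>q. ereal (G q)"]) simp
  have upper: "PB x \<le> ereal (\<phi> z + L * dist x z)" if "x \<in> ball 0 1" "z \<in> sphere 0 1" for x z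
    unfolding PB_def using UBw that by (intro Sup_least) blast
  define A where "A = 2 * L + 1"
  have interior: "PB y \<le> PB x + ereal (A * dist x y)" if x: "x \<in> ball 0 1" and y: "y \<in> ball 0 1" for x y
  proof (cases "x = y")
    case True then show ?thesis by simp
  next
    case False
    define h where "h = y - x"
    have h: "h \<noteq> 0" using False by (simp add: h_def)
    show ?thesis unfolding PB_def[of y]
    proof (rule Sup_least)
      fix t assume "t \<in> {w y |w. w \<in> F}"
      then obtain w where w: "w \<in> F" "t = w y" by blast
      define T where "T = (\<lambda>\<xi>. if \<xi> + h \<in> ball 0 1 then w (\<xi> + h) - ereal ((2 * L + 1) * norm h) else -\<infinity>)"
      define W where "W = (\<lambda>\<xi>. max (ereal (G \<xi>)) (T \<xi>))"
      have wO: "OPSH (ball 0 1) w" using w by (simp add: F_def)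
      have UB': "\<forall>q\<in>ball 0 1. \<forall>z\<in>sphere 0 1. w q \<le> ereal (\<phi> z + L * dist q z)"
        using UBw w(1) by blast
      have "OPSH (ball 0 1) W \<and> (\<forall>z\<in>sphere 0 1. Limsup (at z within ball 0 1) W \<le> ereal (\<phi> z))"
        by (rule glue[OF L GL G3 G4 GO wO UB' h T_def W_def])
      then have "W \<in> F" by (simp add: F_def)
      then have "W x \<le> PB x" unfolding PB_def by (intro Sup_upper CollectI exI[of _ W]) simp
      moreover have "T x \<le> W x" by (simp add: W_def)
      moreover have "T x = w y - ereal (A * dist x y)"
        using y by (simp add: T_def h_def A_def dist_norm norm_minus_commute)
      ultimately have "w y - ereal (A * dist x y) \<le> PB x" by simp
      then show "t \<le> PB x + ereal (A * dist x y)" using w(2) by (simp add: ereal_minus_le_to_plus)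
    qed
  qed
  obtain z0 :: "oct \<times> oct" where z0: "z0 \<in> sphere 0 1" using sphere_ne by blast
  define v where "v x = real_of_ereal (u x)" for x
  have uB: "u x = ereal (v x)" "u x = PB x" if "x \<in> ball 0 1" for x
  proof -
    have ux: "u x = PB x" using assms(2)[of x] that PBeq by simp
    have "ereal (G x) \<le> PB x" by (rule lower)
    moreover have "PB x \<le> ereal (\<phi> z0 + L * dist x z0)" by (rule upper[OF that z0])
    ultimately have "\<bar>PB x\<bar> \<noteq> \<infinity>" by auto
    then show "u x = ereal (v x)" using ux by (simp add: v_def ereal_real')
    show "u x = PB x" by (rule ux)
  qed
  have uS: "u x = ereal (v x)" "v x = \<phi> x" if "x \<in> sphere 0 1" for x
  proof -
    have "x \<notin> ball 0 1" using that by simp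
    then have "u x = ereal (\<phi> x)" using assms(2)[of x] by simp
    then show "u x = ereal (v x)" "v x = \<phi> x" by (simp_all add: v_def)
  qed
  have cb: "x \<in> ball 0 1 \<or> x \<in> sphere 0 1" if "x \<in> cball 0 1" for x :: "oct \<times> oct"
    using that by (auto simp: less_le)
  have vB: "ereal (G x) \<le> ereal (v x)" "ereal (v x) \<le> ereal (\<phi> z + L * dist x z)"
    if "x \<in> ball 0 1" "z \<in> sphere 0 1" for x z
    using lower[of x] upper[OF that] uB[OF that(1)] by auto
  have ALpos: "L \<le> A" "0 \<le> A" using L by (auto simp: A_def)
  have onesided: "v y \<le> v x + A * dist x y" if x: "x \<in> cball 0 1" and y: "y \<in> cball 0 1" for x y
  proof -
    have dA: "L * dist x y \<le> A * dist x y" using ALpos by (intro mult_right_mono) auto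
    consider "x \<in> ball 0 1" "y \<in> ball 0 1" | "x \<in> ball 0 1" "y \<in> sphere 0 1"
      | "x \<in> sphere 0 1" "y \<in> ball 0 1" | "x \<in> sphere 0 1" "y \<in> sphere 0 1"
      using cb[OF x] cb[OF y] by blast
    then show ?thesis
    proof cases
      case 1
      then have "ereal (v y) \<le> ereal (v x) + ereal (A * dist x y)"
        using interior[OF 1] uB by simp
      then show ?thesis by simp
    next
      case 2
      have "v y = G y" using uS(2)[OF 2(2)] G3 2(2) by simp
      also have "G y \<le> G x + L * dist x y" using GL[rule_format, of y x] by (simp add: abs_le_iff dist_commute)
      also have "G x \<le> v x" using vB(1)[OF 2(1) 2(2)] by simp
      finally show ?thesis using dA by simp
    next
      case 3
      have "v y \<le> \<phi> x + L * dist y x" using vB(2)[OF 3(2) 3(1)] by simp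
      also have "\<phi> x = v x" using uS(2)[OF 3(1)] by simp
      finally show ?thesis using dA by (simp add: dist_commute)
    next
      case 4
      have "v y = G y" "v x = G x" using uS(2) 4 G3 by simp_all
      moreover have "G y \<le> G x + L * dist x y" using GL[rule_format, of y x] by (simp add: abs_le_iff dist_commute)
      ultimately show ?thesis using dA by simp
    qed
  qed
  show ?thesis
  proof (intro exI[of _ v] exI[of _ A] conjI ballI)
    fix x :: "oct \<times> oct" assume "x \<in> cball 0 1"
    then show "u x = ereal (v x)" using cb uB uS by blast
  next
    show "A-lipschitz_on (cball 0 1) v"
      unfolding lipschitz_on_def
    proof (intro conjI ballI)
      show "0 \<le> A" by (rule ALpos(2))
      fix x y :: "oct \<times> oct" assume x: "x \<in> cball 0 1" and y: "y \<in> cball 0 1"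
      have "v y \<le> v x + A * dist x y" by (rule onesided[OF x y])
      moreover have "v x \<le> v y + A * dist y x" by (rule onesided[OF y x])
      ultimately show "dist (v x) (v y) \<le> A * dist x y" by (simp add: dist_real_def dist_commute abs_le_iff)
    qed
  qed
qed

end
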